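(* Let $F$ be any subfield of $\mathbb{R}$ and $r\in F$. Then (1) $T[F]$ proves $\forall x\,(x\le r\rightarrow x^2-2x+1\ge0)$ if and only if $r<1$; and (2) $T[F]$ proves $\forall x\,(x\ge r\rightarrow x^2-2x+1\ge0)$ if and only if $r>1$.
   Context: For $a\in F$, $f_a$ is a unary function symbol interpreted as $f_a(x)=ax$; a constant $c\in F$ is denoted by the term $f_c(1)$. $x^2$ denotes $x\times x$ and $2x$ denotes $f_2(x)$. $T_{\mathrm{add}}[F]$ is the set of sentences true in $(\mathbb{R},0,1,+,-,<,(f_a)_{a\in F})$, $T_{\mathrm{mult}}[F]$ the set of sentences true in $(\mathbb{R},0,1,\times,\div,<,(f_a)_{a\in F})$ with $x\div0=0$, and $T[F]=T_{\mathrm{add}}[F]\cup T_{\mathrm{mult}}[F]$, a theory in the union of the two languages. *)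

theory Defs
  imports Complex_Main
begin

datatype tm =
    Var nat
  | Zero
  | One
  | Add tm tm
  | Sub tm tm
  | Mul tm tm
  | Dvd tm tm
  | Sc real tm

datatype fm =
    Eq tm tm
  | Less tm tm
  | Bot
  | Neg fm
  | Conj fm fm
  | Disj fm fm
  | Imp fm fm
  | All nat fm
  | Ex nat fm

datatype lang = LAdd | LMult | LBoth

fun tm_in :: "lang \<Rightarrow> real set \<Rightarrow> tm \<Rightarrow> bool" where
  "tm_in L F (Var n) = True"
| "tm_in L F Zero = True"
| "tm_in L F One = True"
| "tm_in L F (Add s t) = (L \<noteq> LMult \<and> tm_in L F s \<and> tm_in L F t)"
| "tm_in L F (Sub s t) = (L \<noteq> LMult \<and> tm_in L F s \<and> tm_in L F t)"
| "tm_in L F (Mul s t) = (L \<noteq> LAdd \<and> tm_in L F s \<and> tm_in L F t)"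
| "tm_in L F (Dvd s t) = (L \<noteq> LAdd \<and> tm_in L F s \<and> tm_in L F t)"
| "tm_in L F (Sc a t) = (a \<in> F \<and> tm_in L F t)"

fun fm_in :: "lang \<Rightarrow> real set \<Rightarrow> fm \<Rightarrow> bool" where
  "fm_in L F (Eq s t) = (tm_in L F s \<and> tm_in L F t)"
| "fm_in L F (Less s t) = (tm_in L F s \<and> tm_in L F t)"
| "fm_in L F Bot = True"
| "fm_in L F (Neg p) = fm_in L F p"
| "fm_in L F (Conj p q) = (fm_in L F p \<and> fm_in L F q)"
| "fm_in L F (Disj p q) = (fm_in L F p \<and> fm_in L F q)"
| "fm_in L F (Imp p q) = (fm_in L F p \<and> fm_in L F q)"
| "fm_in L F (All x p) = fm_in L F p"
| "fm_in L F (Ex x p) = fm_in L F p"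

fun tm_vars :: "tm \<Rightarrow> nat set" where
  "tm_vars (Var n) = {n}"
| "tm_vars Zero = {}"
| "tm_vars One = {}"
| "tm_vars (Add s t) = tm_vars s \<union> tm_vars t"
| "tm_vars (Sub s t) = tm_vars s \<union> tm_vars t"
| "tm_vars (Mul s t) = tm_vars s \<union> tm_vars t"
| "tm_vars (Dvd s t) = tm_vars s \<union> tm_vars t"
| "tm_vars (Sc a t) = tm_vars t"

fun free_vars :: "fm \<Rightarrow> nat set" where
  "free_vars (Eq s t) = tm_vars s \<union> tm_vars t"
| "free_vars (Less s t) = tm_vars s \<union> tm_vars t"
| "free_vars Bot = {}"
| "free_vars (Neg p) = free_vars p"
| "free_vars (Conj p q) = free_vars p \<union> free_vars q"
| "free_vars (Disj p q) = free_vars p \<union> free_vars q"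
| "free_vars (Imp p q) = free_vars p \<union> free_vars q"
| "free_vars (All x p) = free_vars p - {x}"
| "free_vars (Ex x p) = free_vars p - {x}"

definition sentence_in :: "lang \<Rightarrow> real set \<Rightarrow> fm \<Rightarrow> bool" where
  "sentence_in L F p \<longleftrightarrow> fm_in L F p \<and> free_vars p = {}"

record 'a struct =
  carrier :: "'a set"
  zero :: 'a
  one :: 'a
  plus :: "'a \<Rightarrow> 'a \<Rightarrow> 'a"
  minus :: "'a \<Rightarrow> 'a \<Rightarrow> 'a"
  times :: "'a \<Rightarrow> 'a \<Rightarrow> 'a"
  divide :: "'a \<Rightarrow> 'a \<Rightarrow> 'a"
  scal :: "real \<Rightarrow> 'a \<Rightarrow> 'a"
  less :: "'a \<Rightarrow> 'a \<Rightarrow> bool"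

fun tm_eval :: "'a struct \<Rightarrow> (nat \<Rightarrow> 'a) \<Rightarrow> tm \<Rightarrow> 'a" where
  "tm_eval M e (Var n) = e n"
| "tm_eval M e Zero = zero M"
| "tm_eval M e One = one M"
| "tm_eval M e (Add s t) = plus M (tm_eval M e s) (tm_eval M e t)"
| "tm_eval M e (Sub s t) = minus M (tm_eval M e s) (tm_eval M e t)"
| "tm_eval M e (Mul s t) = times M (tm_eval M e s) (tm_eval M e t)"
| "tm_eval M e (Dvd s t) = divide M (tm_eval M e s) (tm_eval M e t)"
| "tm_eval M e (Sc a t) = scal M a (tm_eval M e t)"

fun sat :: "'a struct \<Rightarrow> (nat \<Rightarrow> 'a) \<Rightarrow> fm \<Rightarrow> bool" where
  "sat M e (Eq s t) = (tm_eval M e s = tm_eval M e t)"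
| "sat M e (Less s t) = less M (tm_eval M e s) (tm_eval M e t)"
| "sat M e Bot = False"
| "sat M e (Neg p) = (\<not> sat M e p)"
| "sat M e (Conj p q) = (sat M e p \<and> sat M e q)"
| "sat M e (Disj p q) = (sat M e p \<or> sat M e q)"
| "sat M e (Imp p q) = (sat M e p \<longrightarrow> sat M e q)"
| "sat M e (All x p) = (\<forall>a\<in>carrier M. sat M (e(x := a)) p)"
| "sat M e (Ex x p) = (\<exists>a\<in>carrier M. sat M (e(x := a)) p)"

definition holds :: "'a struct \<Rightarrow> fm \<Rightarrow> bool" where
  "holds M p \<longleftrightarrow> (\<forall>e. (\<forall>n. e n \<in> carrier M) \<longrightarrow> sat M e p)"

definition is_struct :: "real set \<Rightarrow> 'a struct \<Rightarrow> bool" where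
  "is_struct F M \<longleftrightarrow> carrier M \<noteq> {} \<and>
     zero M \<in> carrier M \<and> one M \<in> carrier M \<and>
     (\<forall>x\<in>carrier M. \<forall>y\<in>carrier M.
        plus M x y \<in> carrier M \<and> minus M x y \<in> carrier M \<and>
        times M x y \<in> carrier M \<and> divide M x y \<in> carrier M) \<and>
     (\<forall>a\<in>F. \<forall>x\<in>carrier M. scal M a x \<in> carrier M)"

text \<open>The standard real structure (x / 0 = 0 is Isabelle's convention for division).
  The additive structure of the paper is its reduct to the additive language and the
  multiplicative structure its reduct to the multiplicative language.\<close>
definition Rstruct :: "real struct" where
  "Rstruct = \<lparr> carrier = UNIV, zero = 0, one = 1, plus = (+), minus = (-),
     times = (*), divide = (/), scal = (\<lambda>a x. a * x), less = (<) \<rparr>"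

definition T_add :: "real set \<Rightarrow> fm set" where
  "T_add F = {p. sentence_in LAdd F p \<and> holds Rstruct p}"

definition T_mult :: "real set \<Rightarrow> fm set" where
  "T_mult F = {p. sentence_in LMult F p \<and> holds Rstruct p}"

definition T :: "real set \<Rightarrow> fm set" where
  "T F = T_add F \<union> T_mult F"

text \<open>Provability from T[F], via the completeness theorem as semantic consequence.
  Models are taken with carrier a subset of a type of cardinality continuum (here real):
  the language over F has cardinality at most continuum, so by downward
  Loewenheim-Skolem every model of T[F] has an elementarily equivalent submodel of
  cardinality at most continuum, hence an isomorphic copy of this form.\<close>
definition proves :: "real set \<Rightarrow> fm \<Rightarrow> bool" where
  "proves F p \<longleftrightarrow> sentence_in LBoth F p \<and>
     (\<forall>M :: real struct. is_struct F M \<and> (\<forall>q\<in>T F. holds M q) \<longrightarrow> holds M p)"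

definition subfield_of_reals :: "real set \<Rightarrow> bool" where
  "subfield_of_reals F \<longleftrightarrow> 0 \<in> F \<and> 1 \<in> F \<and>
     (\<forall>x\<in>F. \<forall>y\<in>F. x + y \<in> F \<and> x - y \<in> F \<and> x * y \<in> F) \<and>
     (\<forall>x\<in>F. x \<noteq> 0 \<longrightarrow> inverse x \<in> F)"

definition cst :: "real \<Rightarrow> tm" where "cst c = Sc c One"

definition le_fm :: "tm \<Rightarrow> tm \<Rightarrow> fm" where "le_fm s t = Disj (Less s t) (Eq s t)"

text \<open>x^2 - 2x + 1, with x^2 = x \<times> x and 2x = f_2(x).\<close>
definition poly_tm :: "tm \<Rightarrow> tm" where
  "poly_tm x = Add (Sub (Mul x x) (Sc 2 x)) One"

definition phi_le :: "real \<Rightarrow> fm" where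
  "phi_le r = All 0 (Imp (le_fm (Var 0) (cst r)) (le_fm Zero (poly_tm (Var 0))))"

definition phi_ge :: "real \<Rightarrow> fm" where
  "phi_ge r = All 0 (Imp (le_fm (cst r) (Var 0)) (le_fm Zero (poly_tm (Var 0))))"

end

theory Submission
  imports Defs "HOL-Analysis.Analysis"
begin


definition iso_on :: "lang \<Rightarrow> real set \<Rightarrow> 'a struct \<Rightarrow> 'b struct \<Rightarrow> ('a \<Rightarrow> 'b) \<Rightarrow> bool" where
 "iso_on L F M1 M2 h \<longleftrightarrow> bij_betw h (carrier M1) (carrier M2) \<and> h (zero M1) = zero M2 \<and> h (one M1) = one M2 \<and>
   (\<forall>x\<in>carrier M1. \<forall>y\<in>carrier M1.
      (L \<noteq> LMult \<longrightarrow> h (plus M1 x y) = plus M2 (h x) (h y) \<and> h (minus M1 x y) = minus M2 (h x) (h y)) \<and>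
      (L \<noteq> LAdd \<longrightarrow> h (times M1 x y) = times M2 (h x) (h y) \<and> h (divide M1 x y) = divide M2 (h x) (h y)) \<and>
      (less M2 (h x) (h y) \<longleftrightarrow> less M1 x y)) \<and>
   (\<forall>a\<in>F. \<forall>x\<in>carrier M1. h (scal M1 a x) = scal M2 a (h x))"

lemma iso_tm:
  assumes S: "is_struct F M1" and I: "iso_on L F M1 M2 h" and e: "\<forall>n. e n \<in> carrier M1"
  shows "tm_in L F t \<Longrightarrow> tm_eval M1 e t \<in> carrier M1 \<and> h (tm_eval M1 e t) = tm_eval M2 (\<lambda>n. h (e n)) t"
  by (induction t) (use S I e in \<open>auto simp: is_struct_def iso_on_def\<close>)

lemma iso_sat:
  assumes S: "is_struct F M1" and I: "iso_on L F M1 M2 h"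
  shows "fm_in L F p \<Longrightarrow> \<forall>n. e n \<in> carrier M1 \<Longrightarrow> sat M2 (\<lambda>n. h (e n)) p = sat M1 e p"
proof (induction p arbitrary: e)
  case (Eq s t)
  have inj: "inj_on h (carrier M1)" using I by (auto simp: iso_on_def bij_betw_def)
  from Eq have "tm_eval M1 e s \<in> carrier M1" "h (tm_eval M1 e s) = tm_eval M2 (\<lambda>n. h (e n)) s"
     "tm_eval M1 e t \<in> carrier M1" "h (tm_eval M1 e t) = tm_eval M2 (\<lambda>n. h (e n)) t"
    using iso_tm[OF S I, of e s] iso_tm[OF S I, of e t] by auto
  then show ?case using inj_on_eq_iff[OF inj] by (metis sat.simps(1))
next
  case (Less s t)
  have L: "\<forall>x\<in>carrier M1. \<forall>y\<in>carrier M1. less M2 (h x) (h y) = less M1 x y"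
    using I by (simp add: iso_on_def)
  from Less have "tm_eval M1 e s \<in> carrier M1" "h (tm_eval M1 e s) = tm_eval M2 (\<lambda>n. h (e n)) s"
     "tm_eval M1 e t \<in> carrier M1" "h (tm_eval M1 e t) = tm_eval M2 (\<lambda>n. h (e n)) t"
    using iso_tm[OF S I, of e s] iso_tm[OF S I, of e t] by auto
  then show ?case using L by (metis sat.simps(2))
next
  case (All x p)
  have C2: "carrier M2 = h ` carrier M1" using I by (auto simp: iso_on_def bij_betw_def)
  have eq: "(\<lambda>n. h (e n))(x := h b) = (\<lambda>n. h ((e(x := b)) n))" for b by auto
  have K: "sat M2 ((\<lambda>n. h (e n))(x := h b)) p = sat M1 (e(x:=b)) p" if "b \<in> carrier M1" for b
  proof -
    have e': "\<forall>n. (e(x:=b)) n \<in> carrier M1" using All.prems that by auto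
    have p': "fm_in L F p" using All.prems by simp
    show ?thesis unfolding eq by (rule All.IH[OF p' e'])
  qed
  have "sat M2 (\<lambda>n. h (e n)) (All x p) = (\<forall>b\<in>carrier M1. sat M2 ((\<lambda>n. h (e n))(x := h b)) p)"
    unfolding sat.simps C2 by blast
  also have "\<dots> = (\<forall>b\<in>carrier M1. sat M1 (e(x:=b)) p)" using K by (intro ball_cong refl) simp
  finally show ?case by (simp only: sat.simps)
next
  case (Ex x p)
  have C2: "carrier M2 = h ` carrier M1" using I by (auto simp: iso_on_def bij_betw_def)
  have eq: "(\<lambda>n. h (e n))(x := h b) = (\<lambda>n. h ((e(x := b)) n))" for b by auto
  have K: "sat M2 ((\<lambda>n. h (e n))(x := h b)) p = sat M1 (e(x:=b)) p" if "b \<in> carrier M1" for b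
  proof -
    have e': "\<forall>n. (e(x:=b)) n \<in> carrier M1" using Ex.prems that by auto
    have p': "fm_in L F p" using Ex.prems by simp
    show ?thesis unfolding eq by (rule Ex.IH[OF p' e'])
  qed
  have "sat M2 (\<lambda>n. h (e n)) (Ex x p) = (\<exists>b\<in>carrier M1. sat M2 ((\<lambda>n. h (e n))(x := h b)) p)"
    unfolding sat.simps C2 by blast
  also have "\<dots> = (\<exists>b\<in>carrier M1. sat M1 (e(x:=b)) p)" using K by (intro bex_cong refl) simp
  finally show ?case by (simp only: sat.simps)
next
  case Bot then show ?case by simp
next
  case (Neg p) then show ?case by simp
next
  case (Conj p q) then show ?case by simp
next
  case (Disj p q) then show ?case by simp
next
  case (Imp p q) then show ?case by simp
qed

lemma iso_holds:
  assumes S: "is_struct F M1" and I: "iso_on L F M1 M2 h" and p: "fm_in L F p" and H: "holds M1 p"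
  shows "holds M2 p"
  unfolding holds_def
proof (intro allI impI)
  fix e2 :: "nat \<Rightarrow> _" assume e2: "\<forall>n. e2 n \<in> carrier M2"
  have bij: "bij_betw h (carrier M1) (carrier M2)" using I by (simp add: iso_on_def)
  define e1 where "e1 = inv_into (carrier M1) h \<circ> e2"
  have e1: "\<forall>n. e1 n \<in> carrier M1" using e2 bij
    by (auto simp: e1_def bij_betw_def inv_into_into)
  have "(\<lambda>n. h (e1 n)) = e2" using e2 bij by (auto simp: e1_def bij_betw_def f_inv_into_f)
  then show "sat M2 e2 p" using iso_sat[OF S I p e1] H e1 by (auto simp: holds_def)
qed

lemma iso_not_holds:
  assumes S: "is_struct F M1" and I: "iso_on L F M1 M2 h" and p: "fm_in L F p"
    and e: "\<forall>n. e n \<in> carrier M1" and ns: "\<not> sat M1 e p"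
  shows "\<not> holds M2 p"
proof -
  have bij: "bij_betw h (carrier M1) (carrier M2)" using I by (simp add: iso_on_def)
  have "\<forall>n. (\<lambda>n. h (e n)) n \<in> carrier M2" using e bij by (auto simp: bij_betw_def)
  moreover have "\<not> sat M2 (\<lambda>n. h (e n)) p" using iso_sat[OF S I p e] ns by simp
  ultimately show ?thesis unfolding holds_def by (auto dest: spec[of _ "\<lambda>n. h (e n)"])
qed



definition model :: "real set \<Rightarrow> 'a struct \<Rightarrow> bool" where
  "model F M \<longleftrightarrow> is_struct F M \<and> (\<forall>q\<in>T F. holds M q)"

lemma model_add: "model F M \<Longrightarrow> sentence_in LAdd F q \<Longrightarrow> holds Rstruct q \<Longrightarrow> holds M q"
  by (auto simp: model_def T_def T_add_def)

lemma model_mult: "model F M \<Longrightarrow> sentence_in LMult F q \<Longrightarrow> holds Rstruct q \<Longrightarrow> holds M q"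
  by (auto simp: model_def T_def T_mult_def)

lemma holds_sat0: "model F M \<Longrightarrow> holds M p \<Longrightarrow> sat M (\<lambda>_. zero M) p"
  by (auto simp: model_def is_struct_def holds_def)

abbreviation (input) POLY :: "tm \<Rightarrow> tm \<Rightarrow> tm" where
  "POLY x y \<equiv> Add (Sub y (Sc 2 x)) tm.One"

definition "fS0 = All 0 (Imp (le_fm (Var 0) (cst 0)) (le_fm Zero (Mul (Var 0) (Var 0))))"
definition "fA0 = All 0 (All 1 (Imp (Conj (le_fm (Var 0) (cst 0)) (le_fm Zero (Var 1))) (le_fm Zero (POLY (Var 0) (Var 1)))))"
definition "fMc c = All 0 (Imp (le_fm (cst c) (Var 0)) (le_fm (Sc c (Var 0)) (Mul (Var 0) (Var 0))))"
definition "fAcd c d = All 0 (All 1 (Imp (Conj (Conj (le_fm (cst c) (Var 0)) (le_fm (Var 0) (cst d))) (le_fm (Sc c (Var 0)) (Var 1))) (le_fm Zero (POLY (Var 0) (Var 1)))))"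
definition "fAtop c = All 0 (All 1 (Imp (Conj (le_fm (cst c) (Var 0)) (le_fm (Sc c (Var 0)) (Var 1))) (le_fm Zero (POLY (Var 0) (Var 1)))))"
definition "fSplit a b = All 0 (Imp (le_fm (Var 0) (cst b)) (Disj (le_fm (Var 0) (cst a)) (Conj (le_fm (cst a) (Var 0)) (le_fm (Var 0) (cst b)))))"
definition "fSplit2 a b = All 0 (Imp (le_fm (cst a) (Var 0)) (Disj (le_fm (cst b) (Var 0)) (Conj (le_fm (cst a) (Var 0)) (le_fm (Var 0) (cst b)))))"
definition "fTr r c = All 0 (Imp (le_fm (Var 0) (cst r)) (le_fm (Var 0) (cst c)))"
definition "fTr2 r c = All 0 (Imp (le_fm (cst r) (Var 0)) (le_fm (cst c) (Var 0)))"

lemmas fdefs = fS0_def fA0_def fMc_def fAcd_def fAtop_def fSplit_def fSplit2_def fTr_def fTr2_def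

lemma subfield_nat: "subfield_of_reals F \<Longrightarrow> real n \<in> F"
  by (induction n) (auto simp: subfield_of_reals_def)

lemma subfield_div: "subfield_of_reals F \<Longrightarrow> x \<in> F \<Longrightarrow> y \<in> F \<Longrightarrow> x / y \<in> F"
  unfolding subfield_of_reals_def
  by (cases "y = 0") (auto simp: divide_inverse)

lemma subfield_k1: "subfield_of_reals F \<Longrightarrow> real k + 1 \<in> F"
  using subfield_nat[of F "Suc k"] by (simp add: add.commute)
lemma subfield_k2: "subfield_of_reals F \<Longrightarrow> real k + 2 \<in> F"
  using subfield_nat[of F "Suc (Suc k)"] by (simp add: add.commute)

lemma subfield_2: "subfield_of_reals F \<Longrightarrow> 2 \<in> F"
  using subfield_nat[of F 2] by simp

lemma or_le: "((a::real) < b \<or> a = b) = (a \<le> b)" by auto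
lemma or_le2: "((a::real) < b \<or> b = a) = (a \<le> b)" by auto

lemma real_Acd: "(c::real) \<le> 2 \<Longrightarrow> 0 \<le> (c - 2) * d + 1 \<Longrightarrow> c \<le> x \<Longrightarrow> x \<le> d \<Longrightarrow> c * x \<le> y \<Longrightarrow> 0 \<le> y - 2 * x + 1"
proof -
  assume a: "c \<le> 2" "0 \<le> (c - 2) * d + 1" "c \<le> x" "x \<le> d" "c * x \<le> y"
  have "(c - 2) * d \<le> (c - 2) * x" using a by (intro mult_left_mono_neg) auto
  then show ?thesis using a by (simp add: algebra_simps)
qed

lemma real_Atop: "(c::real) \<ge> 2 \<Longrightarrow> c \<le> x \<Longrightarrow> c * x \<le> y \<Longrightarrow> 0 \<le> y - 2 * x + 1"
proof -
  assume a: "c \<ge> 2" "c \<le> x" "c * x \<le> y"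
  have "0 \<le> (c - 2) * x" using a by (intro mult_nonneg_nonneg) auto
  moreover have "(c-2)*x = c*x - 2*x" by (simp add: algebra_simps)
  ultimately show ?thesis using a by linarith
qed

lemma real_Acd': "(c::real) \<le> 2 \<Longrightarrow> 0 \<le> (c - 2) * d + 1 \<Longrightarrow> c \<le> x \<Longrightarrow> x \<le> d \<Longrightarrow> c * x \<le> y \<Longrightarrow> 0 < y - 2 * x + 1 \<or> 0 = y - 2 * x + 1"
  using real_Acd[of c d x y] by auto
lemma real_Atop': "(c::real) \<ge> 2 \<Longrightarrow> c \<le> x \<Longrightarrow> c * x \<le> y \<Longrightarrow> 0 < y - 2 * x + 1 \<or> 0 = y - 2 * x + 1"
  using real_Atop[of c x y] by auto

context
  fixes F and M :: "'a struct"
  assumes SF: "subfield_of_reals F" and MM: "model F M"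
begin

lemma F0: "0 \<in> F" and F2: "2 \<in> F" using SF subfield_2 by (auto simp: subfield_of_reals_def)

lemma mS0: "\<forall>x\<in>carrier M. (less M x (scal M 0 (one M)) \<or> x = scal M 0 (one M)) \<longrightarrow>
    (less M (zero M) (times M x x) \<or> zero M = times M x x)"
proof -
  have "holds M fS0"
    by (rule model_mult[OF MM]) (auto simp: fdefs sentence_in_def cst_def le_fm_def F0 holds_def Rstruct_def zero_less_mult_iff)
  from holds_sat0[OF MM this] show ?thesis by (simp add: fdefs cst_def le_fm_def)
qed

lemma mA0: "\<forall>x\<in>carrier M. \<forall>y\<in>carrier M. (less M x (scal M 0 (one M)) \<or> x = scal M 0 (one M)) \<and>
    (less M (zero M) y \<or> zero M = y) \<longrightarrow>
    (less M (zero M) (plus M (minus M y (scal M 2 x)) (one M)) \<or> zero M = plus M (minus M y (scal M 2 x)) (one M))"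
proof -
  have "holds M fA0"
    by (rule model_add[OF MM]) (auto simp: fdefs sentence_in_def cst_def le_fm_def F0 F2 holds_def Rstruct_def)
  from holds_sat0[OF MM this] show ?thesis by (simp add: fdefs cst_def le_fm_def)
qed

lemma mMc: assumes "c \<in> F" "0 \<le> c"
  shows "\<forall>x\<in>carrier M. (less M (scal M c (one M)) x \<or> scal M c (one M) = x) \<longrightarrow>
    (less M (scal M c x) (times M x x) \<or> scal M c x = times M x x)"
proof -
  have "holds M (fMc c)"
    by (rule model_mult[OF MM]) (use assms in \<open>auto simp: fdefs sentence_in_def cst_def le_fm_def holds_def Rstruct_def or_le intro: mult_right_mono\<close>)
  from holds_sat0[OF MM this] show ?thesis by (simp add: fdefs cst_def le_fm_def)
qed

lemma mAcd: assumes "c \<in> F" "d \<in> F" "c \<le> 2" "0 \<le> (c - 2) * d + 1"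
  shows "\<forall>x\<in>carrier M. \<forall>y\<in>carrier M. ((less M (scal M c (one M)) x \<or> scal M c (one M) = x) \<and>
    (less M x (scal M d (one M)) \<or> x = scal M d (one M))) \<and>
    (less M (scal M c x) y \<or> scal M c x = y) \<longrightarrow>
    (less M (zero M) (plus M (minus M y (scal M 2 x)) (one M)) \<or> zero M = plus M (minus M y (scal M 2 x)) (one M))"
proof -
  have "holds M (fAcd c d)"
    by (rule model_add[OF MM]) (use assms in \<open>auto simp: fdefs sentence_in_def cst_def le_fm_def F2 holds_def Rstruct_def or_le or_le2 intro!: real_Acd\<close>)
  from holds_sat0[OF MM this] show ?thesis by (simp add: fdefs cst_def le_fm_def)
qed

lemma mAtop: assumes "c \<in> F" "2 \<le> c"
  shows "\<forall>x\<in>carrier M. \<forall>y\<in>carrier M. (less M (scal M c (one M)) x \<or> scal M c (one M) = x) \<and>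
    (less M (scal M c x) y \<or> scal M c x = y) \<longrightarrow>
    (less M (zero M) (plus M (minus M y (scal M 2 x)) (one M)) \<or> zero M = plus M (minus M y (scal M 2 x)) (one M))"
proof -
  have "holds M (fAtop c)"
    by (rule model_add[OF MM]) (use assms in \<open>auto simp: fdefs sentence_in_def cst_def le_fm_def F2 holds_def Rstruct_def or_le or_le2 intro!: real_Atop\<close>)
  from holds_sat0[OF MM this] show ?thesis by (simp add: fdefs cst_def le_fm_def)
qed

lemma mSplit: assumes "a \<in> F" "b \<in> F" "a \<le> b"
  shows "\<forall>x\<in>carrier M. (less M x (scal M b (one M)) \<or> x = scal M b (one M)) \<longrightarrow>
    (less M x (scal M a (one M)) \<or> x = scal M a (one M)) \<or>
    ((less M (scal M a (one M)) x \<or> scal M a (one M) = x) \<and> (less M x (scal M b (one M)) \<or> x = scal M b (one M)))"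
proof -
  have "holds M (fSplit a b)"
    by (rule model_add[OF MM]) (use assms in \<open>auto simp: fdefs sentence_in_def cst_def le_fm_def holds_def Rstruct_def\<close>)
  from holds_sat0[OF MM this] show ?thesis by (simp add: fdefs cst_def le_fm_def)
qed

lemma mSplit2: assumes "a \<in> F" "b \<in> F" "a \<le> b"
  shows "\<forall>x\<in>carrier M. (less M (scal M a (one M)) x \<or> scal M a (one M) = x) \<longrightarrow>
    (less M (scal M b (one M)) x \<or> scal M b (one M) = x) \<or>
    ((less M (scal M a (one M)) x \<or> scal M a (one M) = x) \<and> (less M x (scal M b (one M)) \<or> x = scal M b (one M)))"
proof -
  have "holds M (fSplit2 a b)"
    by (rule model_add[OF MM]) (use assms in \<open>auto simp: fdefs sentence_in_def cst_def le_fm_def holds_def Rstruct_def\<close>)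
  from holds_sat0[OF MM this] show ?thesis by (simp add: fdefs cst_def le_fm_def)
qed

lemma mTr: assumes "r \<in> F" "c \<in> F" "r \<le> c"
  shows "\<forall>x\<in>carrier M. (less M x (scal M r (one M)) \<or> x = scal M r (one M)) \<longrightarrow>
    (less M x (scal M c (one M)) \<or> x = scal M c (one M))"
proof -
  have "holds M (fTr r c)"
    by (rule model_add[OF MM]) (use assms in \<open>auto simp: fdefs sentence_in_def cst_def le_fm_def holds_def Rstruct_def\<close>)
  from holds_sat0[OF MM this] show ?thesis by (simp add: fdefs cst_def le_fm_def)
qed

lemma mTr2: assumes "r \<in> F" "c \<in> F" "c \<le> r"
  shows "\<forall>x\<in>carrier M. (less M (scal M r (one M)) x \<or> scal M r (one M) = x) \<longrightarrow>
    (less M (scal M c (one M)) x \<or> scal M c (one M) = x)"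
proof -
  have "holds M (fTr2 r c)"
    by (rule model_add[OF MM]) (use assms in \<open>auto simp: fdefs sentence_in_def cst_def le_fm_def holds_def Rstruct_def\<close>)
  from holds_sat0[OF MM this] show ?thesis by (simp add: fdefs cst_def le_fm_def)
qed


lemma closed: "x \<in> carrier M \<Longrightarrow> y \<in> carrier M \<Longrightarrow> times M x y \<in> carrier M"
  using MM by (auto simp: model_def is_struct_def)

lemma part1_k: "\<forall>x\<in>carrier M. (less M x (scal M (real k / (real k + 1)) (one M)) \<or> x = scal M (real k / (real k + 1)) (one M)) \<longrightarrow>
    (less M (zero M) (plus M (minus M (times M x x) (scal M 2 x)) (one M)) \<or> zero M = plus M (minus M (times M x x) (scal M 2 x)) (one M))"
proof (induction k)
  case 0
  show ?case using mS0 mA0 closed by simp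
next
  case (Suc k)
  define c where "c = real k / (real k + 1)"
  define d where "d = real (Suc k) / (real (Suc k) + 1)"
  have cF: "c \<in> F" unfolding c_def using SF by (intro subfield_div subfield_nat subfield_k1 subfield_k2) simp_all
  have dF: "d \<in> F" unfolding d_def using SF by (intro subfield_div subfield_nat subfield_k1 subfield_k2) simp_all
  have c0: "0 \<le> c" unfolding c_def by simp
  have cd: "c \<le> d" unfolding c_def d_def by (simp add: field_simps)
  have c2: "c \<le> 2" unfolding c_def by (simp add: field_simps)
  have cm: "c - 2 = - (real k + 2) / (real k + 1)" unfolding c_def by (simp add: field_simps)
  have d': "d = (real k + 1) / (real k + 2)" unfolding d_def by (simp add: add.commute)
  have nz: "real k + 1 \<noteq> 0" "real k + 2 \<noteq> 0" by arith+
  have "(c - 2) * d = -1" unfolding cm d' using nz by (simp add: divide_eq_eq)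
  then have cd0: "0 \<le> (c - 2) * d + 1" by simp
  show ?case
  proof
    fix x assume x: "x \<in> carrier M"
    have IH: "(less M x (scal M c (one M)) \<or> x = scal M c (one M)) \<longrightarrow>
      (less M (zero M) (plus M (minus M (times M x x) (scal M 2 x)) (one M)) \<or> zero M = plus M (minus M (times M x x) (scal M 2 x)) (one M))"
      using Suc.IH x unfolding c_def by blast
    show "(less M x (scal M (real (Suc k) / (real (Suc k) + 1)) (one M)) \<or> x = scal M (real (Suc k) / (real (Suc k) + 1)) (one M)) \<longrightarrow>
      (less M (zero M) (plus M (minus M (times M x x) (scal M 2 x)) (one M)) \<or> zero M = plus M (minus M (times M x x) (scal M 2 x)) (one M))"
      unfolding d_def[symmetric]
      using IH mSplit[OF cF dF cd, rule_format, OF x] mMc[OF cF c0, rule_format, OF x]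
        mAcd[OF cF dF c2 cd0, rule_format, OF x closed[OF x x]] by blast
  qed
qed

lemma part1: assumes "r \<in> F" "r < 1" shows "holds M (phi_le r)"
proof -
  obtain k :: nat where k: "real k \<ge> 1 / (1 - r)" using real_arch_simple by blast
  define c where "c = real k / (real k + 1)"
  have cF: "c \<in> F" unfolding c_def using SF by (intro subfield_div subfield_nat subfield_k1 subfield_k2) simp_all
  have "1 / (1 - r) \<le> real k + 1" using k by simp
  then have "1 \<le> (real k + 1) * (1 - r)" using assms by (simp add: field_simps)
  then have rc: "r \<le> c" unfolding c_def by (simp add: field_simps)
  show ?thesis unfolding holds_def phi_le_def
    using mTr[OF assms(1) cF rc] part1_k[of k] unfolding c_def[symmetric]
    by (auto simp: cst_def le_fm_def poly_tm_def)
qed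

lemma part2_k: "\<forall>x\<in>carrier M. (less M (scal M ((real k + 2) / (real k + 1)) (one M)) x \<or> scal M ((real k + 2) / (real k + 1)) (one M) = x) \<longrightarrow>
    (less M (zero M) (plus M (minus M (times M x x) (scal M 2 x)) (one M)) \<or> zero M = plus M (minus M (times M x x) (scal M 2 x)) (one M))"
proof (induction k)
  case 0
  show ?case using mMc[OF F2] mAtop[OF F2] closed by simp
next
  case (Suc k)
  define c where "c = (real (Suc k) + 2) / (real (Suc k) + 1)"
  define d where "d = (real k + 2) / (real k + 1)"
  have cF: "c \<in> F" unfolding c_def using SF by (intro subfield_div subfield_nat subfield_k1 subfield_k2) simp_all
  have dF: "d \<in> F" unfolding d_def using SF by (intro subfield_div subfield_nat subfield_k1 subfield_k2) simp_all
  have c0: "0 \<le> c" unfolding c_def by simp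
  have cd: "c \<le> d" unfolding c_def d_def by (simp add: field_simps)
  have c2: "c \<le> 2" unfolding c_def by (simp add: field_simps)
  have cm: "c - 2 = - (real k + 1) / (real k + 2)" unfolding c_def by (simp add: field_simps)
  have nz: "real k + 1 \<noteq> 0" "real k + 2 \<noteq> 0" by arith+
  have "(c - 2) * d = -1" unfolding cm d_def using nz by (simp add: divide_eq_eq)
  then have cd0: "0 \<le> (c - 2) * d + 1" by simp
  show ?case
  proof
    fix x assume x: "x \<in> carrier M"
    have IH: "(less M (scal M d (one M)) x \<or> scal M d (one M) = x) \<longrightarrow>
      (less M (zero M) (plus M (minus M (times M x x) (scal M 2 x)) (one M)) \<or> zero M = plus M (minus M (times M x x) (scal M 2 x)) (one M))"
      using Suc.IH x unfolding d_def by blast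
    show "(less M (scal M ((real (Suc k) + 2) / (real (Suc k) + 1)) (one M)) x \<or> scal M ((real (Suc k) + 2) / (real (Suc k) + 1)) (one M) = x) \<longrightarrow>
      (less M (zero M) (plus M (minus M (times M x x) (scal M 2 x)) (one M)) \<or> zero M = plus M (minus M (times M x x) (scal M 2 x)) (one M))"
      unfolding c_def[symmetric]
      using IH mSplit2[OF cF dF cd, rule_format, OF x] mMc[OF cF c0, rule_format, OF x]
        mAcd[OF cF dF c2 cd0, rule_format, OF x closed[OF x x]] by blast
  qed
qed

lemma part2: assumes "r \<in> F" "r > 1" shows "holds M (phi_ge r)"
proof -
  obtain k :: nat where k: "real k \<ge> 1 / (r - 1)" using real_arch_simple by blast
  define c where "c = (real k + 2) / (real k + 1)"
  have cF: "c \<in> F" unfolding c_def using SF by (intro subfield_div subfield_nat subfield_k1 subfield_k2) simp_all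
  have "1 / (r - 1) \<le> real k + 1" using k by simp
  then have "1 \<le> (real k + 1) * (r - 1)" using assms by (simp add: field_simps)
  then have rc: "c \<le> r" unfolding c_def by (simp add: field_simps)
  show ?thesis unfolding holds_def phi_ge_def
    using mTr2[OF assms(1) cF rc] part2_k[of k] unfolding c_def[symmetric]
    by (auto simp: cst_def le_fm_def poly_tm_def)
qed

end



definition ultra :: "nat filter \<Rightarrow> bool" where
  "ultra U \<longleftrightarrow> U \<noteq> bot \<and> (\<forall>P. eventually P U \<or> eventually (\<lambda>x. \<not> P x) U) \<and> U \<le> sequentially"

lemma max_filter_ultra:
  assumes "F \<noteq> bot"
  assumes max: "\<And>G. G \<noteq> bot \<Longrightarrow> G \<le> F \<Longrightarrow> F = G"
  shows "eventually P F \<or> eventually (\<lambda>x. \<not> P x) F"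
proof (rule disjCI)
  assume "\<not> (\<forall>\<^sub>Fx in F. \<not> P x)"
  then have "inf F (principal {x. P x}) \<noteq> bot"
    by (simp add: trivial_limit_def eventually_inf_principal not_eventually)
  then have F: "F = inf F (principal {x. P x})"
    by (rule max) simp
  show "eventually P F"
    by (subst F) (simp add: eventually_inf_principal)
qed

lemma ex_ultra: "\<exists>U. ultra U"
proof -
  let ?F = "sequentially :: nat filter"
  have F: "?F \<noteq> bot" by simp
  let ?X = "{G. G \<noteq> bot \<and> G \<le> ?F}"
  let ?R = "{(b, a). a \<noteq> bot \<and> a \<le> b \<and> b \<le> ?F}"
  have bot_notin_R: "c \<in> Chains ?R \<Longrightarrow> bot \<notin> c" for c
    by (auto simp: Chains_def)
  have [simp]: "Field ?R = ?X"
    by (auto simp: Field_def bot_unique)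
  have "\<exists>m\<in>Field ?R. \<forall>a\<in>Field ?R. (m, a) \<in> ?R \<longrightarrow> a = m" (is "\<exists>m\<in>?A. ?B m")
  proof (rule Zorns_po_lemma)
    show "Partial_order ?R"
      by (auto simp: partial_order_on_def preorder_on_def
          antisym_def refl_on_def trans_def Field_def bot_unique)
    show "\<exists>u\<in>Field ?R. \<forall>a\<in>C. (a, u) \<in> ?R" if C: "C \<in> Chains ?R" for C
    proof (simp, intro exI conjI ballI)
      have Inf_C: "Inf C \<noteq> bot" "Inf C \<le> ?F" if "C \<noteq> {}"
      proof -
        from C that have "Inf C = bot \<longleftrightarrow> (\<exists>x\<in>C. x = bot)"
          unfolding trivial_limit_def by (intro eventually_Inf_base) (auto simp: Chains_def)
        with C show "Inf C \<noteq> bot"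
          by (simp add: bot_notin_R)
        from that obtain x where "x \<in> C" by auto
        with C show "Inf C \<le> ?F"
          by (auto intro!: Inf_lower2[of x] simp: Chains_def)
      qed
      then have [simp]: "inf ?F (Inf C) = (if C = {} then ?F else Inf C)"
        using C by (auto simp add: inf_absorb2)
      from C show "inf ?F (Inf C) \<noteq> bot"
        by (simp add: F Inf_C)
      from C show "inf ?F (Inf C) \<le> ?F"
        by (simp add: Chains_def Inf_C F)
      with C show "inf ?F (Inf C) \<le> x" "x \<le> ?F" if "x \<in> C" for x
        using that  by (auto intro: Inf_lower simp: Chains_def)
    qed
  qed
  then obtain U where U: "U \<in> ?A" "?B U" ..
  have "ultra U"
    unfolding ultra_def
  proof (intro conjI allI)
    show "U \<noteq> bot" "U \<le> ?F" using U by auto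
    show "eventually P U \<or> eventually (\<lambda>x. \<not> P x) U" for P
      by (rule max_filter_ultra) (use U in auto)
  qed
  then show ?thesis ..
qed

definition UF :: "nat filter" where "UF = (SOME U. ultra U)"

lemma UF: "ultra UF" unfolding UF_def using ex_ultra by (rule someI_ex)

lemma UF_proper: "UF \<noteq> bot" using UF by (simp add: ultra_def)
lemma UF_ultra: "eventually P UF \<or> eventually (\<lambda>x. \<not> P x) UF" using UF by (simp add: ultra_def)
lemma UF_seq: "eventually P sequentially \<Longrightarrow> eventually P UF"
  using UF by (auto simp: ultra_def le_filter_def)
lemma UF_not: "eventually (\<lambda>x. \<not> P x) UF \<longleftrightarrow> \<not> eventually P UF"
  using UF_ultra[of P] UF_proper eventually_frequently by (auto simp: frequently_def)
lemma UF_disj: "eventually (\<lambda>x. P x \<or> Q x) UF \<longleftrightarrow> eventually P UF \<or> eventually Q UF"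
proof
  assume a: "eventually (\<lambda>x. P x \<or> Q x) UF"
  show "eventually P UF \<or> eventually Q UF"
  proof (rule ccontr)
    assume "\<not> (eventually P UF \<or> eventually Q UF)"
    then have "eventually (\<lambda>x. \<not> P x) UF" "eventually (\<lambda>x. \<not> Q x) UF" using UF_not by auto
    with a have "eventually (\<lambda>x. (P x \<or> Q x) \<and> \<not> P x \<and> \<not> Q x) UF"
      by (simp add: eventually_conj_iff)
    then have "eventually (\<lambda>x. False) UF" by (rule eventually_mono) auto
    then show False using UF_proper by (simp add: trivial_limit_def)
  qed
next
  assume "eventually P UF \<or> eventually Q UF"
  then show "eventually (\<lambda>x. P x \<or> Q x) UF" by (auto elim: eventually_mono)
qed
lemma UF_imp: "eventually (\<lambda>x. P x \<longrightarrow> Q x) UF \<longleftrightarrow> (eventually P UF \<longrightarrow> eventually Q UF)"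
  using UF_disj[of "\<lambda>x. \<not> P x" Q] UF_not[of P] by simp
lemma UF_False: "\<not> eventually (\<lambda>x. False) UF" using UF_proper by (simp add: trivial_limit_def)



type_synonym hr = "nat \<Rightarrow> real"

definition ueq :: "hr \<Rightarrow> hr \<Rightarrow> bool" where
  "ueq f g \<longleftrightarrow> eventually (\<lambda>n. f n = g n) UF"

lemma ueq_refl[simp]: "ueq f f" by (simp add: ueq_def)
lemma ueq_sym: "ueq f g \<Longrightarrow> ueq g f" by (simp add: ueq_def eq_commute)
lemma ueq_trans: "ueq f g \<Longrightarrow> ueq g h \<Longrightarrow> ueq f h"
  unfolding ueq_def by (auto elim: eventually_elim2)

definition rep :: "hr \<Rightarrow> hr" where "rep f = (SOME g. ueq f g)"

lemma rep_ueq: "ueq (rep f) f"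
proof -
  have "ueq f (rep f)" unfolding rep_def by (rule someI[of "ueq f" f]) simp
  then show ?thesis by (rule ueq_sym)
qed

lemma rep_cong: "ueq f g \<Longrightarrow> rep f = rep g"
proof -
  assume "ueq f g"
  then have "(\<lambda>h. ueq f h) = (\<lambda>h. ueq g h)"
    by (auto intro: ueq_trans ueq_sym)
  then show ?thesis unfolding rep_def by simp
qed

lemma rep_eq_iff: "rep f = rep g \<longleftrightarrow> ueq f g"
proof
  assume "rep f = rep g"
  then have "ueq f (rep g)" using rep_ueq[of f] by (simp add: ueq_sym)
  then show "ueq f g" using rep_ueq[of g] by (rule ueq_trans)
qed (rule rep_cong)

lemma rep_idem: "x \<in> range rep \<Longrightarrow> rep x = x"
  using rep_cong rep_ueq by blast

lemma in_range_eq_iff: "x \<in> range rep \<Longrightarrow> y \<in> range rep \<Longrightarrow> x = y \<longleftrightarrow> ueq x y"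
  using rep_eq_iff[of x y] rep_idem[of x] rep_idem[of y] by simp

lemma ev_cong2: "ueq x X \<Longrightarrow> ueq y Y \<Longrightarrow>
   eventually (\<lambda>n. R (x n) (y n)) UF \<longleftrightarrow> eventually (\<lambda>n. R (X n) (Y n)) UF"
  unfolding ueq_def
proof (intro iffI)
  assume a: "\<forall>\<^sub>F n in UF. x n = X n" "\<forall>\<^sub>F n in UF. y n = Y n" "\<forall>\<^sub>F n in UF. R (x n) (y n)"
  have "\<forall>\<^sub>F n in UF. x n = X n \<and> y n = Y n \<and> R (x n) (y n)" using a by (simp add: eventually_conj_iff)
  then show "\<forall>\<^sub>F n in UF. R (X n) (Y n)" by (rule eventually_mono) auto
next
  assume a: "\<forall>\<^sub>F n in UF. x n = X n" "\<forall>\<^sub>F n in UF. y n = Y n" "\<forall>\<^sub>F n in UF. R (X n) (Y n)"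
  have "\<forall>\<^sub>F n in UF. x n = X n \<and> y n = Y n \<and> R (X n) (Y n)" using a by (simp add: eventually_conj_iff)
  then show "\<forall>\<^sub>F n in UF. R (x n) (y n)" by (rule eventually_mono) auto
qed

lemma ueq_op2: "ueq x X \<Longrightarrow> ueq y Y \<Longrightarrow> ueq (\<lambda>n. f (x n) (y n)) (\<lambda>n. f (X n) (Y n))"
  unfolding ueq_def by (auto elim: eventually_elim2)

lemma ueq_op1: "ueq x X \<Longrightarrow> ueq (\<lambda>n. f (x n)) (\<lambda>n. f (X n))"
  unfolding ueq_def by (auto elim: eventually_mono)

definition Kst :: "hr struct" where
  "Kst = \<lparr> carrier = range rep, zero = rep (\<lambda>n. 0), one = rep (\<lambda>n. 1),
     plus = (\<lambda>x y. rep (\<lambda>n. x n + y n)), minus = (\<lambda>x y. rep (\<lambda>n. x n - y n)),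
     times = (\<lambda>x y. rep (\<lambda>n. x n * y n)), divide = (\<lambda>x y. rep (\<lambda>n. x n / y n)),
     scal = (\<lambda>a x. rep (\<lambda>n. a * x n)), less = (\<lambda>x y. eventually (\<lambda>n. x n < y n) UF) \<rparr>"

lemma Kst_simps[simp]: "carrier Kst = range rep" "zero Kst = rep (\<lambda>n. 0)" "one Kst = rep (\<lambda>n. 1)"
  "plus Kst x y = rep (\<lambda>n. x n + y n)" "minus Kst x y = rep (\<lambda>n. x n - y n)"
  "times Kst x y = rep (\<lambda>n. x n * y n)" "divide Kst x y = rep (\<lambda>n. x n / y n)"
  "scal Kst a x = rep (\<lambda>n. a * x n)" "less Kst x y = eventually (\<lambda>n. x n < y n) UF"
  by (simp_all add: Kst_def)

lemma Rstruct_simps[simp]: "carrier Rstruct = UNIV" "zero Rstruct = 0" "one Rstruct = 1"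
  "plus Rstruct = (+)" "minus Rstruct = (-)" "times Rstruct = (*)" "divide Rstruct = (/)"
  "scal Rstruct = (*)" "less Rstruct = (<)"
  by (simp_all add: Rstruct_def)

lemma Kst_struct: "is_struct F Kst" by (auto simp: is_struct_def)

lemma los_tm: "ueq (tm_eval Kst e t) (\<lambda>n. tm_eval Rstruct (\<lambda>v. e v n) t)"
proof (induction t)
  case (Add s t) show ?case unfolding tm_eval.simps Kst_simps by simp (rule ueq_trans[OF rep_ueq ueq_op2[OF Add.IH]])
next
  case (Sub s t) show ?case unfolding tm_eval.simps Kst_simps by simp (rule ueq_trans[OF rep_ueq ueq_op2[OF Sub.IH]])
next
  case (Mul s t) show ?case unfolding tm_eval.simps Kst_simps by simp (rule ueq_trans[OF rep_ueq ueq_op2[OF Mul.IH]])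
next
  case (Dvd s t) show ?case unfolding tm_eval.simps Kst_simps by simp (rule ueq_trans[OF rep_ueq ueq_op2[OF Dvd.IH]])
next
  case (Sc a t) show ?case unfolding tm_eval.simps Kst_simps by simp (rule ueq_trans[OF rep_ueq ueq_op1[OF Sc.IH]])
qed (simp_all add: rep_ueq)

lemma tm_in_range: "\<forall>n. e n \<in> range rep \<Longrightarrow> tm_eval Kst e t \<in> range rep"
  by (induction t) auto


lemma los_sat: "\<forall>n. e n \<in> range rep \<Longrightarrow> sat Kst e p \<longleftrightarrow> eventually (\<lambda>n. sat Rstruct (\<lambda>v. e v n) p) UF"
proof (induction p arbitrary: e)
  case (Eq s t)
  have "sat Kst e (Eq s t) \<longleftrightarrow> ueq (tm_eval Kst e s) (tm_eval Kst e t)"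
    using in_range_eq_iff tm_in_range[OF Eq.prems] by simp
  also have "\<dots> \<longleftrightarrow> eventually (\<lambda>n. tm_eval Rstruct (\<lambda>v. e v n) s = tm_eval Rstruct (\<lambda>v. e v n) t) UF"
    unfolding ueq_def by (rule ev_cong2[OF los_tm los_tm])
  finally show ?case by simp
next
  case (Less s t)
  have "sat Kst e (Less s t) \<longleftrightarrow> eventually (\<lambda>n. tm_eval Kst e s n < tm_eval Kst e t n) UF"
    by simp
  also have "\<dots> \<longleftrightarrow> eventually (\<lambda>n. tm_eval Rstruct (\<lambda>v. e v n) s < tm_eval Rstruct (\<lambda>v. e v n) t) UF"
    by (rule ev_cong2[OF los_tm los_tm])
  finally show ?case by simp
next
  case Bot then show ?case using UF_False by simp
next
  case (Neg p) then show ?case using UF_not by simp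
next
  case (Conj p q) then show ?case by (simp add: eventually_conj_iff)
next
  case (Disj p q) then show ?case by (simp add: UF_disj)
next
  case (Imp p q) then show ?case by (simp add: UF_imp)
next
  case (Ex x p)
  have upd: "(\<lambda>v. (e(x := a)) v n) = (\<lambda>v. e v n)(x := a n)" for a n by auto
  have IH: "sat Kst (e(x := a)) p \<longleftrightarrow> eventually (\<lambda>n. sat Rstruct ((\<lambda>v. e v n)(x := a n)) p) UF"
    if "a \<in> range rep" for a
  proof -
    have e': "\<forall>n. (e(x:=a)) n \<in> range rep" using Ex.prems that by auto
    from Ex.IH[OF e'] show ?thesis by (simp only: upd)
  qed
  show ?case
  proof
    assume "sat Kst e (Ex x p)"
    then obtain a where "a \<in> range rep" "sat Kst (e(x := a)) p" by auto
    then have "eventually (\<lambda>n. sat Rstruct ((\<lambda>v. e v n)(x := a n)) p) UF" using IH by blast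
    then show "eventually (\<lambda>n. sat Rstruct (\<lambda>v. e v n) (Ex x p)) UF"
      by (rule eventually_mono) auto
  next
    assume a: "eventually (\<lambda>n. sat Rstruct (\<lambda>v. e v n) (Ex x p)) UF"
    define b where "b n = (SOME c. sat Rstruct ((\<lambda>v. e v n)(x := c)) p)" for n
    have "eventually (\<lambda>n. sat Rstruct ((\<lambda>v. e v n)(x := b n)) p) UF"
      using a by (rule eventually_mono) (auto simp: b_def intro: someI)
    moreover have "ueq (rep b) b" by (rule rep_ueq)
    ultimately have "eventually (\<lambda>n. sat Rstruct ((\<lambda>v. e v n)(x := rep b n)) p) UF"
      unfolding ueq_def by (auto elim: eventually_elim2)
    then have "sat Kst (e(x := rep b)) p" using IH by blast
    then show "sat Kst e (Ex x p)" by auto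
  qed
next
  case (All x p)
  have upd: "(\<lambda>v. (e(x := a)) v n) = (\<lambda>v. e v n)(x := a n)" for a n by auto
  have IH: "sat Kst (e(x := a)) p \<longleftrightarrow> eventually (\<lambda>n. sat Rstruct ((\<lambda>v. e v n)(x := a n)) p) UF"
    if "a \<in> range rep" for a
  proof -
    have e': "\<forall>n. (e(x:=a)) n \<in> range rep" using All.prems that by auto
    from All.IH[OF e'] show ?thesis by (simp only: upd)
  qed
  show ?case
  proof
    assume "eventually (\<lambda>n. sat Rstruct (\<lambda>v. e v n) (All x p)) UF"
    then show "sat Kst e (All x p)"
      using IH by (auto elim: eventually_mono)
  next
    assume a: "sat Kst e (All x p)"
    show "eventually (\<lambda>n. sat Rstruct (\<lambda>v. e v n) (All x p)) UF"
    proof (rule ccontr)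
      assume "\<not> ?thesis"
      then have "eventually (\<lambda>n. \<not> sat Rstruct (\<lambda>v. e v n) (All x p)) UF" using UF_not by blast
      then have na: "eventually (\<lambda>n. \<exists>c. \<not> sat Rstruct ((\<lambda>v. e v n)(x := c)) p) UF"
        by (rule eventually_mono) auto
      define b where "b n = (SOME c. \<not> sat Rstruct ((\<lambda>v. e v n)(x := c)) p)" for n
      have "eventually (\<lambda>n. \<not> sat Rstruct ((\<lambda>v. e v n)(x := b n)) p) UF"
        using na by (rule eventually_mono) (unfold b_def, rule someI_ex)
      moreover have "ueq (rep b) b" by (rule rep_ueq)
      ultimately have "eventually (\<lambda>n. \<not> sat Rstruct ((\<lambda>v. e v n)(x := rep b n)) p) UF"
        unfolding ueq_def by (auto elim: eventually_elim2)
      moreover have "eventually (\<lambda>n. sat Rstruct ((\<lambda>v. e v n)(x := rep b n)) p) UF"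
        using a IH by auto
      ultimately have "eventually (\<lambda>n. False) UF" by (auto elim: eventually_elim2)
      then show False using UF_False by blast
    qed
  qed
qed

lemma los_holds: "holds Rstruct p \<Longrightarrow> holds Kst p"
  unfolding holds_def
proof (intro allI impI)
  fix e :: "nat \<Rightarrow> hr" assume H: "\<forall>e. (\<forall>n. e n \<in> carrier Rstruct) \<longrightarrow> sat Rstruct e p"
    and e: "\<forall>n. e n \<in> carrier Kst"
  have "eventually (\<lambda>n. sat Rstruct (\<lambda>v. e v n) p) UF" using H by simp
  then show "sat Kst e p" using los_sat e by simp
qed



definition fin :: "hr \<Rightarrow> bool" where "fin f \<longleftrightarrow> (\<exists>B. eventually (\<lambda>n. \<bar>f n\<bar> \<le> B) UF)"
definition st :: "hr \<Rightarrow> real" where "st f = Lim UF f"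

lemma UF_nontriv: "\<not> trivial_limit UF" using UF_proper by simp

lemma conv_st: "(f \<longlongrightarrow> s) UF \<Longrightarrow> st f = s"
  unfolding st_def using UF_nontriv by (rule tendsto_Lim)

lemma conv_fin: "(f \<longlongrightarrow> s) UF \<Longrightarrow> fin f"
proof -
  assume "(f \<longlongrightarrow> s) UF"
  then have "eventually (\<lambda>n. dist (f n) s < 1) UF" by (rule tendstoD) simp
  then have "eventually (\<lambda>n. \<bar>f n\<bar> \<le> \<bar>s\<bar> + 1) UF"
    by (rule eventually_mono) (auto simp: dist_real_def)
  then show ?thesis unfolding fin_def by blast
qed

lemma fin_conv: assumes "fin f" shows "(f \<longlongrightarrow> st f) UF"
proof -
  obtain B where B: "eventually (\<lambda>n. \<bar>f n\<bar> \<le> B) UF" using assms fin_def by blast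
  define A where "A = {a. eventually (\<lambda>n. a \<le> f n) UF}"
  have "eventually (\<lambda>n. -B \<le> f n) UF" using B by (rule eventually_mono) auto
  then have mB: "-B \<in> A" unfolding A_def by simp
  have bdd: "a \<le> B" if "a \<in> A" for a
  proof (rule ccontr)
    assume "\<not> a \<le> B"
    have "eventually (\<lambda>n. a \<le> f n \<and> \<bar>f n\<bar> \<le> B) UF" using that B unfolding A_def
      by (simp add: eventually_conj_iff)
    then have "eventually (\<lambda>n. False) UF" by (rule eventually_mono) (use \<open>\<not> a \<le> B\<close> in auto)
    then show False using UF_False by blast
  qed
  have bddA: "bdd_above A" using bdd by (auto simp: bdd_above_def)
  define s where "s = Sup A"
  have "(f \<longlongrightarrow> s) UF"
  proof (rule order_tendstoI)
    fix a assume "a < s"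
    then obtain a' where "a' \<in> A" "a < a'" using less_cSup_iff[of A a] mB bddA unfolding s_def by blast
    then show "eventually (\<lambda>n. a < f n) UF" unfolding A_def by (auto elim: eventually_mono)
  next
    fix a assume "s < a"
    define m where "m = (s + a) / 2"
    have "m \<notin> A"
    proof
      assume "m \<in> A"
      then have "m \<le> s" unfolding s_def using bddA by (rule cSup_upper)
      then show False using \<open>s < a\<close> unfolding m_def by simp
    qed
    then have "eventually (\<lambda>n. \<not> m \<le> f n) UF" unfolding A_def using UF_not by blast
    then show "eventually (\<lambda>n. f n < a) UF"
      by (rule eventually_mono) (use \<open>s < a\<close> in \<open>auto simp: m_def\<close>)
  qed
  then show ?thesis using conv_st by simp
qed

lemma ueq_tendsto: "ueq f g \<Longrightarrow> (f \<longlongrightarrow> s) UF \<longleftrightarrow> (g \<longlongrightarrow> s) UF"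
  unfolding ueq_def by (rule tendsto_cong)

lemma ueq_fin1: "ueq f g \<Longrightarrow> fin f \<Longrightarrow> fin g"
proof -
  assume "ueq f g" "fin f"
  then obtain B where "eventually (\<lambda>n. \<bar>f n\<bar> \<le> B) UF" "eventually (\<lambda>n. f n = g n) UF"
    unfolding fin_def ueq_def by blast
  then have "eventually (\<lambda>n. \<bar>g n\<bar> \<le> B) UF" by (auto elim: eventually_elim2)
  then show "fin g" unfolding fin_def by blast
qed

lemma ueq_fin: "ueq f g \<Longrightarrow> fin f = fin g"
  using ueq_fin1 ueq_sym by blast

lemma ueq_st: assumes "ueq f g" shows "st f = st g"
proof -
  have "(\<lambda>l. (f \<longlongrightarrow> l) UF) = (\<lambda>l. (g \<longlongrightarrow> l) UF)" using ueq_tendsto[OF assms] by blast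
  then show ?thesis unfolding st_def Topological_Spaces.Lim_def by simp
qed



definition nice :: "hr \<Rightarrow> bool" where "nice f \<longleftrightarrow> fin f \<and> st f \<noteq> 0"

definition Sg :: "(real \<Rightarrow> real) \<Rightarrow> hr \<Rightarrow> hr" where
  "Sg \<rho> f = (\<lambda>n. if nice f then st f * (1 + \<rho> (f n / st f - 1)) else f n)"

definition good :: "(real \<Rightarrow> real) \<Rightarrow> bool" where
  "good \<rho> \<longleftrightarrow> strict_mono \<rho> \<and> \<rho> 0 = 0 \<and> isCont \<rho> 0"

lemma ueq_nice: "ueq f g \<Longrightarrow> nice f = nice g"
  unfolding nice_def using ueq_fin[of f g] ueq_st[of f g] by simp

lemma Sg_ueq: "ueq f g \<Longrightarrow> ueq (Sg \<rho> f) (Sg \<rho> g)"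
proof -
  assume a: "ueq f g"
  show ?thesis
  proof (cases "nice f")
    case True
    then have "nice g" using ueq_nice a by blast
    then show ?thesis using True ueq_op1[OF a, of "\<lambda>x. st g * (1 + \<rho> (x / st g - 1))"] ueq_st[OF a] unfolding Sg_def
      by simp
  next
    case False
    then have "\<not> nice g" using ueq_nice a by blast
    then show ?thesis using False a unfolding Sg_def by simp
  qed
qed

lemma Sg_not_nice: "\<not> nice f \<Longrightarrow> Sg \<rho> f = f"
  unfolding Sg_def by simp

lemma Sg_conv: assumes g: "good \<rho>" and n: "nice f" shows "(Sg \<rho> f \<longlongrightarrow> st f) UF"
proof -
  have f: "(f \<longlongrightarrow> st f) UF" using n fin_conv nice_def by blast
  have s: "st f \<noteq> 0" using n nice_def by blast
  have "((\<lambda>n. f n / st f - 1) \<longlongrightarrow> st f / st f - 1) UF"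
    using s by (intro tendsto_intros f) auto
  then have "((\<lambda>n. f n / st f - 1) \<longlongrightarrow> 0) UF" using s by simp
  moreover have "isCont \<rho> 0" using g good_def by blast
  ultimately have "((\<lambda>n. \<rho> (f n / st f - 1)) \<longlongrightarrow> \<rho> 0) UF"
    by (rule isCont_tendsto_compose[rotated])
  then have "((\<lambda>n. \<rho> (f n / st f - 1)) \<longlongrightarrow> 0) UF" using g good_def by simp
  then have "((\<lambda>n. st f * (1 + \<rho> (f n / st f - 1))) \<longlongrightarrow> st f * (1 + 0)) UF"
    by (intro tendsto_intros)
  then show ?thesis using n unfolding Sg_def by simp
qed

lemma Sg_nice: assumes g: "good \<rho>" and n: "nice f" shows "nice (Sg \<rho> f) \<and> st (Sg \<rho> f) = st f"
proof -
  have c: "(Sg \<rho> f \<longlongrightarrow> st f) UF" by (rule Sg_conv[OF g n])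
  have "st (Sg \<rho> f) = st f" using conv_st[OF c] .
  moreover have "fin (Sg \<rho> f)" using conv_fin[OF c] .
  ultimately show ?thesis using n unfolding nice_def by simp
qed


lemma Sg_inv: assumes g: "good \<rho>" and inv: "\<And>t. \<rho>' (\<rho> t) = t"
  shows "Sg \<rho>' (Sg \<rho> f) = f"
proof (cases "nice f")
  case True
  have "nice (Sg \<rho> f)" "st (Sg \<rho> f) = st f" using Sg_nice[OF g True] by auto
  moreover have s: "st f \<noteq> 0" using True nice_def by blast
  ultimately show ?thesis using True unfolding Sg_def[of \<rho>'] by (auto simp: Sg_def inv)
next
  case False
  then show ?thesis by (simp add: Sg_not_nice)
qed


lemma fin_scale: assumes "fin f" shows "fin (\<lambda>n. a * f n) \<and> st (\<lambda>n. a * f n) = a * st f"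
proof -
  have "((\<lambda>n. a * f n) \<longlongrightarrow> a * st f) UF" using fin_conv[OF assms] by (intro tendsto_intros)
  then show ?thesis using conv_fin conv_st by blast
qed

lemma Sg_scale: assumes g: "good \<rho>" shows "Sg \<rho> (\<lambda>n. a * f n) = (\<lambda>n. a * Sg \<rho> f n)"
proof (cases "a = 0")
  case True
  have "st (\<lambda>n. 0) = 0" by (rule conv_st) simp
  then have "\<not> nice (\<lambda>n. 0)" by (simp add: nice_def)
  then show ?thesis using True by (simp add: Sg_not_nice)
next
  case False
  have finiff: "fin (\<lambda>n. a * f n) = fin f"
  proof
    assume "fin (\<lambda>n. a * f n)"
    from fin_scale[OF this, of "1/a"] show "fin f" using False by simp
  qed (use fin_scale in blast)
  show ?thesis
  proof (cases "nice f")
    case True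
    then have "fin f" "st f \<noteq> 0" by (auto simp: nice_def)
    then have st: "st (\<lambda>n. a * f n) = a * st f" and "nice (\<lambda>n. a * f n)"
      using fin_scale[of f a] False by (auto simp: nice_def)
    then show ?thesis using True False \<open>st f \<noteq> 0\<close> unfolding Sg_def by (auto simp: st)
  next
    case False': False
    have "\<not> nice (\<lambda>n. a * f n)"
    proof
      assume "nice (\<lambda>n. a * f n)"
      then have "fin f" using finiff by (simp add: nice_def)
      then show False using fin_scale[of f a] False False' \<open>nice (\<lambda>n. a * f n)\<close> by (simp add: nice_def)
    qed
    then show ?thesis using False' by (simp add: Sg_not_nice)
  qed
qed

lemma Sg_const: assumes g: "good \<rho>" shows "Sg \<rho> (\<lambda>n. c) = (\<lambda>n. c)"
proof (cases "c = 0")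
  case True
  have "st (\<lambda>n. 0) = 0" by (rule conv_st) simp
  then have "\<not> nice (\<lambda>n. 0)" by (simp add: nice_def)
  then show ?thesis using True by (simp add: Sg_not_nice)
next
  case False
  have "st (\<lambda>n. c) = c" by (rule conv_st) simp
  moreover have "fin (\<lambda>n. c)" by (rule conv_fin[of _ c]) simp
  ultimately show ?thesis using False g by (simp add: Sg_def nice_def good_def)
qed

lemma lim_sep: "(f \<longlongrightarrow> (a::real)) UF \<Longrightarrow> (g \<longlongrightarrow> b) UF \<Longrightarrow> a < b \<Longrightarrow> eventually (\<lambda>n. f n < g n) UF"
proof -
  assume f: "(f \<longlongrightarrow> a) UF" and g: "(g \<longlongrightarrow> b) UF" and ab: "a < b"
  define m where "m = (a + b) / 2"
  have "eventually (\<lambda>n. f n < m) UF" using f by (rule order_tendstoD) (use ab in \<open>simp add: m_def\<close>)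
  moreover have "eventually (\<lambda>n. m < g n) UF" using g by (rule order_tendstoD) (use ab in \<open>simp add: m_def\<close>)
  ultimately show ?thesis by (auto elim: eventually_elim2)
qed

lemma lim_le: "(f \<longlongrightarrow> (a::real)) UF \<Longrightarrow> (g \<longlongrightarrow> b) UF \<Longrightarrow> eventually (\<lambda>n. f n < g n) UF \<Longrightarrow> a \<le> b"
proof (rule ccontr)
  assume f: "(f \<longlongrightarrow> a) UF" and g: "(g \<longlongrightarrow> b) UF" and e: "eventually (\<lambda>n. f n < g n) UF" and "\<not> a \<le> b"
  then have "eventually (\<lambda>n. g n < f n) UF" using lim_sep[OF g f] by linarith
  with e have "eventually (\<lambda>n. False) UF" by (auto elim: eventually_elim2)
  then show False using UF_False by blast
qed

lemma unbdd_above: assumes f: "(f \<longlongrightarrow> a) UF" and g: "\<not> fin g" and e: "eventually (\<lambda>n. f n < g n) UF"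
  shows "eventually (\<lambda>n. M < g n) UF"
proof -
  define B where "B = max M (\<bar>a\<bar> + 1)"
  have "\<not> eventually (\<lambda>n. \<bar>g n\<bar> \<le> B) UF" using g unfolding fin_def by blast
  then have e1: "eventually (\<lambda>n. \<not> \<bar>g n\<bar> \<le> B) UF" using UF_not by blast
  have e2: "eventually (\<lambda>n. a - 1 < f n) UF" using f by (rule order_tendstoD) simp
  have "eventually (\<lambda>n. \<not> \<bar>g n\<bar> \<le> B \<and> a - 1 < f n \<and> f n < g n) UF"
    using e1 e2 e by (simp add: eventually_conj_iff)
  then show ?thesis by (rule eventually_mono) (auto simp: B_def)
qed

lemma unbdd_below: assumes g: "(g \<longlongrightarrow> b) UF" and f: "\<not> fin f" and e: "eventually (\<lambda>n. f n < g n) UF"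
  shows "eventually (\<lambda>n. f n < M) UF"
proof -
  define B where "B = max (-M) (\<bar>b\<bar> + 1)"
  have "\<not> eventually (\<lambda>n. \<bar>f n\<bar> \<le> B) UF" using f unfolding fin_def by blast
  then have e1: "eventually (\<lambda>n. \<not> \<bar>f n\<bar> \<le> B) UF" using UF_not by blast
  have e2: "eventually (\<lambda>n. g n < b + 1) UF" using g by (rule order_tendstoD) simp
  have "eventually (\<lambda>n. \<not> \<bar>f n\<bar> \<le> B \<and> g n < b + 1 \<and> f n < g n) UF"
    using e1 e2 e by (simp add: eventually_conj_iff)
  then show ?thesis by (rule eventually_mono) (auto simp: B_def)
qed

lemma pt_mono: assumes g: "good \<rho>" and s: "s \<noteq> 0" and ab: "a < b"
  shows "s * (1 + \<rho> (a / s - 1)) < s * (1 + \<rho> (b / s - 1))"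
proof (cases "s > 0")
  case True
  then have "a / s - 1 < b / s - 1" using ab by (simp add: divide_strict_right_mono)
  then have "\<rho> (a / s - 1) < \<rho> (b / s - 1)" using g by (simp add: good_def strict_mono_less)
  then show ?thesis using True by simp
next
  case False
  then have "s < 0" using s by simp
  then have "b / s - 1 < a / s - 1" using ab by (simp add: divide_strict_right_mono_neg)
  then have "\<rho> (b / s - 1) < \<rho> (a / s - 1)" using g by (simp add: good_def strict_mono_less)
  then show ?thesis using \<open>s < 0\<close> by (simp add: mult_strict_left_mono_neg)
qed

lemma Sg_mono: assumes g: "good \<rho>" and e: "eventually (\<lambda>n. f n < h n) UF"
  shows "eventually (\<lambda>n. Sg \<rho> f n < Sg \<rho> h n) UF"
proof (cases "nice f")
  case nf: True
  have cf: "(Sg \<rho> f \<longlongrightarrow> st f) UF" by (rule Sg_conv[OF g nf])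
  have ff: "(f \<longlongrightarrow> st f) UF" using nf fin_conv nice_def by blast
  show ?thesis
  proof (cases "nice h")
    case nh: True
    have ch: "(Sg \<rho> h \<longlongrightarrow> st h) UF" by (rule Sg_conv[OF g nh])
    have fh: "(h \<longlongrightarrow> st h) UF" using nh fin_conv nice_def by blast
    have le: "st f \<le> st h" by (rule lim_le[OF ff fh e])
    show ?thesis
    proof (cases "st f = st h")
      case True
      show ?thesis using e
        by (rule eventually_mono) (use nf nh True g pt_mono in \<open>auto simp: Sg_def nice_def\<close>)
    next
      case False
      then show ?thesis using lim_sep[OF cf ch] le by simp
    qed
  next
    case nh: False
    show ?thesis
    proof (cases "fin h")
      case True
      then have "st h = 0" using nh nice_def by blast
      then have fh: "(h \<longlongrightarrow> 0) UF" using fin_conv[OF True] by simp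
      have "st f \<le> 0" by (rule lim_le[OF ff fh e])
      then have "st f < 0" using nf nice_def by auto
      then show ?thesis using lim_sep[OF cf fh] nh by (simp add: Sg_not_nice)
    next
      case False
      have "eventually (\<lambda>n. st f + 1 < h n) UF" by (rule unbdd_above[OF ff False e])
      moreover have "eventually (\<lambda>n. Sg \<rho> f n < st f + 1) UF" using cf by (rule order_tendstoD) simp
      ultimately show ?thesis using nh by (auto simp: Sg_not_nice elim: eventually_elim2)
    qed
  qed
next
  case nf: False
  show ?thesis
  proof (cases "nice h")
    case nh: True
    have ch: "(Sg \<rho> h \<longlongrightarrow> st h) UF" by (rule Sg_conv[OF g nh])
    have fh: "(h \<longlongrightarrow> st h) UF" using nh fin_conv nice_def by blast
    show ?thesis
    proof (cases "fin f")
      case True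
      then have "st f = 0" using nf nice_def by blast
      then have ff: "(f \<longlongrightarrow> 0) UF" using fin_conv[OF True] by simp
      have "0 \<le> st h" by (rule lim_le[OF ff fh e])
      then have "0 < st h" using nh nice_def by auto
      then show ?thesis using lim_sep[OF ff ch] nf by (simp add: Sg_not_nice)
    next
      case False
      have "eventually (\<lambda>n. f n < st h - 1) UF" by (rule unbdd_below[OF fh False e])
      moreover have "eventually (\<lambda>n. st h - 1 < Sg \<rho> h n) UF" using ch by (rule order_tendstoD) simp
      ultimately show ?thesis using nf by (auto simp: Sg_not_nice elim: eventually_elim2)
    qed
  next
    case nh: False
    then show ?thesis using nf e by (simp add: Sg_not_nice)
  qed
qed



definition sg :: "(real \<Rightarrow> real) \<Rightarrow> hr \<Rightarrow> hr" where "sg \<rho> x = rep (Sg \<rho> x)"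

lemma sg_range[simp]: "sg \<rho> x \<in> range rep" by (simp add: sg_def)

lemma sg_ueq: "ueq (sg \<rho> x) (Sg \<rho> x)" by (simp add: sg_def rep_ueq)

lemma sg_inv: assumes g: "good \<rho>" and inv: "\<And>t. \<rho>' (\<rho> t) = t" and x: "x \<in> range rep"
  shows "sg \<rho>' (sg \<rho> x) = x"
proof -
  have "ueq (Sg \<rho>' (sg \<rho> x)) (Sg \<rho>' (Sg \<rho> x))" by (rule Sg_ueq[OF sg_ueq])
  then have "sg \<rho>' (sg \<rho> x) = rep (Sg \<rho>' (Sg \<rho> x))" unfolding sg_def[of \<rho>'] by (rule rep_cong)
  also have "\<dots> = rep x" by (simp add: Sg_inv[OF g inv])
  also have "\<dots> = x" by (rule rep_idem[OF x])
  finally show ?thesis .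
qed

lemma sg_scal: assumes g: "good \<rho>" shows "sg \<rho> (rep (\<lambda>n. a * x n)) = rep (\<lambda>n. a * sg \<rho> x n)"
proof -
  have "sg \<rho> (rep (\<lambda>n. a * x n)) = rep (Sg \<rho> (\<lambda>n. a * x n))"
    unfolding sg_def by (rule rep_cong[OF Sg_ueq[OF rep_ueq]])
  also have "\<dots> = rep (\<lambda>n. a * Sg \<rho> x n)" by (simp add: Sg_scale[OF g])
  also have "\<dots> = rep (\<lambda>n. a * sg \<rho> x n)" by (rule rep_cong[OF ueq_op1[OF ueq_sym[OF sg_ueq]]])
  finally show ?thesis .
qed

lemma sg_const: assumes g: "good \<rho>" shows "sg \<rho> (rep (\<lambda>n. c)) = rep (\<lambda>n. c)"
proof -
  have "sg \<rho> (rep (\<lambda>n. c)) = rep (Sg \<rho> (\<lambda>n. c))"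
    unfolding sg_def by (rule rep_cong[OF Sg_ueq[OF rep_ueq]])
  then show ?thesis by (simp add: Sg_const[OF g])
qed

lemma sg_less: assumes g: "good \<rho>" and e: "eventually (\<lambda>n. x n < y n) UF"
  shows "eventually (\<lambda>n. sg \<rho> x n < sg \<rho> y n) UF"
  using Sg_mono[OF g e] ev_cong2[OF sg_ueq sg_ueq, of "(<)" \<rho> x \<rho> y] by simp

definition "gpair \<rho> \<rho>' \<longleftrightarrow> good \<rho> \<and> good \<rho>' \<and> (\<forall>t. \<rho>' (\<rho> t) = t) \<and> (\<forall>t. \<rho> (\<rho>' t) = t)"

lemma gpair_sym: "gpair \<rho> \<rho>' \<Longrightarrow> gpair \<rho>' \<rho>" by (auto simp: gpair_def)

lemma sg_less_iff: assumes gp: "gpair \<rho> \<rho>'" and x: "x \<in> range rep" and y: "y \<in> range rep"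
  shows "eventually (\<lambda>n. sg \<rho> x n < sg \<rho> y n) UF \<longleftrightarrow> eventually (\<lambda>n. x n < y n) UF"
proof
  assume a: "eventually (\<lambda>n. sg \<rho> x n < sg \<rho> y n) UF"
  have g': "good \<rho>'" using gp by (simp add: gpair_def)
  have "eventually (\<lambda>n. sg \<rho>' (sg \<rho> x) n < sg \<rho>' (sg \<rho> y) n) UF"
    by (rule sg_less[OF g' a])
  then show "eventually (\<lambda>n. x n < y n) UF"
    using gp x y by (simp add: sg_inv gpair_def)
qed (use gp sg_less gpair_def in blast)

definition Mtw :: "(real \<Rightarrow> real) \<Rightarrow> (real \<Rightarrow> real) \<Rightarrow> hr struct" where
  "Mtw \<rho> \<rho>' = \<lparr> carrier = range rep, zero = rep (\<lambda>n. 0), one = rep (\<lambda>n. 1),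
     plus = (\<lambda>x y. rep (\<lambda>n. x n + y n)), minus = (\<lambda>x y. rep (\<lambda>n. x n - y n)),
     times = (\<lambda>x y. sg \<rho>' (rep (\<lambda>n. sg \<rho> x n * sg \<rho> y n))),
     divide = (\<lambda>x y. sg \<rho>' (rep (\<lambda>n. sg \<rho> x n / sg \<rho> y n))),
     scal = (\<lambda>a x. rep (\<lambda>n. a * x n)), less = (\<lambda>x y. eventually (\<lambda>n. x n < y n) UF) \<rparr>"

lemma Mtw_simps[simp]: "carrier (Mtw \<rho> \<rho>') = range rep" "zero (Mtw \<rho> \<rho>') = rep (\<lambda>n. 0)" "one (Mtw \<rho> \<rho>') = rep (\<lambda>n. 1)"
  "plus (Mtw \<rho> \<rho>') x y = rep (\<lambda>n. x n + y n)" "minus (Mtw \<rho> \<rho>') x y = rep (\<lambda>n. x n - y n)"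
  "times (Mtw \<rho> \<rho>') x y = sg \<rho>' (rep (\<lambda>n. sg \<rho> x n * sg \<rho> y n))"
  "divide (Mtw \<rho> \<rho>') x y = sg \<rho>' (rep (\<lambda>n. sg \<rho> x n / sg \<rho> y n))"
  "scal (Mtw \<rho> \<rho>') a x = rep (\<lambda>n. a * x n)" "less (Mtw \<rho> \<rho>') x y = eventually (\<lambda>n. x n < y n) UF"
  by (simp_all add: Mtw_def)

lemma Mtw_struct: "is_struct F (Mtw \<rho> \<rho>')" by (auto simp: is_struct_def)

lemma iso_add: "iso_on LAdd F Kst (Mtw \<rho> \<rho>') id"
  by (simp add: iso_on_def bij_betw_def)

lemma iso_mult: assumes gp: "gpair \<rho> \<rho>'" shows "iso_on LMult F Kst (Mtw \<rho> \<rho>') (sg \<rho>')"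
proof -
  have g: "good \<rho>" "good \<rho>'" "\<And>t. \<rho>' (\<rho> t) = t" "\<And>t. \<rho> (\<rho>' t) = t" using gp by (auto simp: gpair_def)
  have bij: "bij_betw (sg \<rho>') (range rep) (range rep)"
    by (rule bij_betw_byWitness[where f'="sg \<rho>"]) (auto simp: sg_inv g)
  show ?thesis unfolding iso_on_def
    using bij sg_const[OF g(2)] sg_scal[OF g(2)] sg_less_iff[OF gpair_sym[OF gp]]
    by (auto simp: sg_inv g)
qed

lemma Mtw_model: assumes gp: "gpair \<rho> \<rho>'" shows "model F (Mtw \<rho> \<rho>')"
  unfolding model_def
proof (intro conjI ballI Mtw_struct)
  fix q assume "q \<in> T F"
  then consider "sentence_in LAdd F q \<and> holds Rstruct q" | "sentence_in LMult F q \<and> holds Rstruct q"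
    unfolding T_def T_add_def T_mult_def by blast
  then show "holds (Mtw \<rho> \<rho>') q"
  proof cases
    case 1
    then have "holds Kst q" using los_holds by blast
    then show ?thesis using iso_holds[OF Kst_struct iso_add] 1 by (auto simp: sentence_in_def)
  next
    case 2
    then have "holds Kst q" using los_holds by blast
    then show ?thesis using iso_holds[OF Kst_struct iso_mult[OF gp]] 2 by (auto simp: sentence_in_def)
  qed
qed



definition transport :: "('a \<Rightarrow> 'b) \<Rightarrow> 'a struct \<Rightarrow> 'b struct" where
  "transport h M = (let g = inv_into (carrier M) h in
    \<lparr> carrier = h ` carrier M, zero = h (zero M), one = h (one M),
      plus = (\<lambda>x y. h (plus M (g x) (g y))), minus = (\<lambda>x y. h (minus M (g x) (g y))),
      times = (\<lambda>x y. h (times M (g x) (g y))), divide = (\<lambda>x y. h (divide M (g x) (g y))),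
      scal = (\<lambda>a x. h (scal M a (g x))), less = (\<lambda>x y. less M (g x) (g y)) \<rparr>)"

lemma transport_iso: assumes "inj_on h (carrier M)"
  shows "iso_on L F M (transport h M) h"
  using assms unfolding iso_on_def transport_def Let_def
  by (auto simp: inj_on_imp_bij_betw)

lemma transport_struct: assumes "inj_on h (carrier M)" "is_struct F M"
  shows "is_struct F (transport h M)"
  using assms unfolding is_struct_def transport_def Let_def
  by (auto simp: inv_into_into)

lemma transport_model: assumes "inj_on h (carrier M)" "model F M"
  shows "model F (transport h M)"
  unfolding model_def
proof (intro conjI ballI)
  have S: "is_struct F M" using assms model_def by blast
  show "is_struct F (transport h M)" by (rule transport_struct[OF assms(1) S])
  fix q assume "q \<in> T F"
  then have "holds M q" and "fm_in LAdd F q \<or> fm_in LMult F q"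
    using assms(2) by (auto simp: model_def T_def T_add_def T_mult_def sentence_in_def)
  then show "holds (transport h M) q"
    using iso_holds[OF S transport_iso[OF assms(1)]] by blast
qed

lemma ex_inj_hr: "\<exists>\<iota> :: hr \<Rightarrow> real. inj \<iota>"
proof -
  obtain h :: "nat set \<Rightarrow> real" where h: "bij_betw h UNIV UNIV"
    using nat_sets_eqpoll_reals unfolding eqpoll_def by blast
  define g where "g = inv h"
  have injg: "inj g" unfolding g_def using h bij_imp_bij_inv bij_is_inj by blast
  have injh: "inj h" using h by (simp add: bij_betw_def)
  define \<iota> where "\<iota> f = h {prod_encode (i, k) | i k. k \<in> g (f i)}" for f :: hr
  have "inj \<iota>"
  proof (rule injI)
    fix f f' :: hr assume "\<iota> f = \<iota> f'"
    then have S: "{prod_encode (i, k) | i k. k \<in> g (f i)} = {prod_encode (i, k) | i k. k \<in> g (f' i)}"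
      unfolding \<iota>_def using injh by (simp add: inj_eq)
    have "g (f i) = g (f' i)" for i
    proof -
      have "k \<in> g (f i) \<longleftrightarrow> k \<in> g (f' i)" for k
      proof -
        have "k \<in> g (f i) \<longleftrightarrow> prod_encode (i, k) \<in> {prod_encode (i, k) | i k. k \<in> g (f i)}"
          by (auto simp: prod_encode_eq)
        also have "\<dots> \<longleftrightarrow> prod_encode (i, k) \<in> {prod_encode (i, k) | i k. k \<in> g (f' i)}" by (simp only: S)
        also have "\<dots> \<longleftrightarrow> k \<in> g (f' i)" by (auto simp: prod_encode_eq)
        finally show ?thesis .
      qed
      then show ?thesis by blast
    qed
    then have "f i = f' i" for i using injg by (simp add: inj_eq)
    then show "f = f'" by blast
  qed
  then show ?thesis by blast
qed

definition iota :: "hr \<Rightarrow> real" where "iota = (SOME \<iota>. inj \<iota>)"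

lemma inj_iota: "inj iota" unfolding iota_def using ex_inj_hr by (rule someI_ex)



lemma ueq_rep_iff: "ueq x X \<Longrightarrow> ueq (rep x) X" by (rule ueq_trans[OF rep_ueq])

lemma Sg_at1: assumes g: "good \<rho>" and u: "(u \<longlongrightarrow> 0) UF"
  shows "Sg \<rho> (\<lambda>n. 1 + u n) = (\<lambda>n. 1 + \<rho> (u n))"
proof -
  have c: "((\<lambda>n. 1 + u n) \<longlongrightarrow> 1) UF" using u by (intro tendsto_eq_intros) auto
  have "nice (\<lambda>n. 1 + u n)" "st (\<lambda>n. 1 + u n) = 1"
    using conv_fin[OF c] conv_st[OF c] by (auto simp: nice_def)
  then show ?thesis by (simp add: Sg_def)
qed

lemma rho_lim: assumes g: "good \<rho>" and u: "(u \<longlongrightarrow> 0) UF" shows "((\<lambda>n. \<rho> (u n)) \<longlongrightarrow> 0) UF"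
proof -
  have "isCont \<rho> 0" "\<rho> 0 = 0" using g by (auto simp: good_def)
  then show ?thesis using isCont_tendsto_compose[of 0 \<rho> u UF] u by simp
qed

lemma poly_val: assumes gp: "gpair \<rho> \<rho>'" and u: "(u \<longlongrightarrow> 0) UF"
  defines "x \<equiv> rep (\<lambda>n. 1 + u n)" and "M \<equiv> Mtw \<rho> \<rho>'"
  shows "ueq (plus M (minus M (times M x x) (scal M 2 x)) (one M))
             (\<lambda>n. \<rho>' ((1 + \<rho> (u n)) * (1 + \<rho> (u n)) - 1) - 2 * u n)"
proof -
  have g: "good \<rho>" "good \<rho>'" using gp by (auto simp: gpair_def)
  define A where "A n = 1 + \<rho> (u n)" for n
  have xX: "ueq x (\<lambda>n. 1 + u n)" unfolding x_def by (rule rep_ueq)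
  have sA: "ueq (sg \<rho> x) A"
  proof -
    have "ueq (sg \<rho> x) (Sg \<rho> x)" by (rule sg_ueq)
    moreover have "ueq (Sg \<rho> x) (Sg \<rho> (\<lambda>n. 1 + u n))" by (rule Sg_ueq[OF xX])
    ultimately show ?thesis unfolding Sg_at1[OF g(1) u] A_def by (rule ueq_trans)
  qed
  have rl: "((\<lambda>n. \<rho> (u n)) \<longlongrightarrow> 0) UF" by (rule rho_lim[OF g(1) u])
  have Al: "((\<lambda>n. A n * A n - 1) \<longlongrightarrow> 0) UF" unfolding A_def using rl by (intro tendsto_eq_intros) auto
  have tt: "ueq (times M x x) (\<lambda>n. 1 + \<rho>' (A n * A n - 1))"
  proof -
    have p: "ueq (rep (\<lambda>n. sg \<rho> x n * sg \<rho> x n)) (\<lambda>n. 1 + (A n * A n - 1))"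
      by (rule ueq_rep_iff) (simp add: ueq_op2[OF sA sA])
    have "ueq (times M x x) (Sg \<rho>' (rep (\<lambda>n. sg \<rho> x n * sg \<rho> x n)))"
      unfolding M_def Mtw_simps by (rule sg_ueq)
    moreover have "ueq (Sg \<rho>' (rep (\<lambda>n. sg \<rho> x n * sg \<rho> x n))) (Sg \<rho>' (\<lambda>n. 1 + (A n * A n - 1)))"
      by (rule Sg_ueq[OF p])
    ultimately show ?thesis unfolding Sg_at1[OF g(2) Al] by (rule ueq_trans)
  qed
  have s2: "ueq (scal M 2 x) (\<lambda>n. 2 * (1 + u n))"
    unfolding M_def Mtw_simps by (rule ueq_rep_iff) (rule ueq_op1[OF xX])
  have m: "ueq (minus M (times M x x) (scal M 2 x)) (\<lambda>n. (1 + \<rho>' (A n * A n - 1)) - 2 * (1 + u n))"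
    unfolding M_def Mtw_simps by (rule ueq_rep_iff) (rule ueq_op2[OF tt[unfolded M_def Mtw_simps] s2[unfolded M_def Mtw_simps]])
  have o: "ueq (one M) (\<lambda>n. 1)" unfolding M_def Mtw_simps by (rule rep_ueq)
  have "ueq (plus M (minus M (times M x x) (scal M 2 x)) (one M))
      (\<lambda>n. ((1 + \<rho>' (A n * A n - 1)) - 2 * (1 + u n)) + 1)"
    unfolding M_def Mtw_simps by (rule ueq_rep_iff) (rule ueq_op2[OF m[unfolded M_def Mtw_simps] o[unfolded M_def Mtw_simps]])
  then show ?thesis unfolding A_def by (simp add: algebra_simps)
qed



lemma proves_model: "proves F p \<Longrightarrow> model F (M :: real struct) \<Longrightarrow> holds M p"
  unfolding proves_def model_def by blast

lemma ev_false: "eventually P UF \<Longrightarrow> eventually (\<lambda>n. \<not> P n) UF \<Longrightarrow> False"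
  using UF_not[of P] by simp


lemma phi_le_in: "subfield_of_reals F \<Longrightarrow> r \<in> F \<Longrightarrow> sentence_in LBoth F (phi_le r)"
  using subfield_2[of F] unfolding sentence_in_def phi_le_def le_fm_def cst_def poly_tm_def by simp

lemma phi_ge_in: "subfield_of_reals F \<Longrightarrow> r \<in> F \<Longrightarrow> sentence_in LBoth F (phi_ge r)"
  using subfield_2[of F] unfolding sentence_in_def phi_ge_def le_fm_def cst_def poly_tm_def by simp


lemma not_proves_gen:
  assumes gp: "gpair \<rho> \<rho>'" and sin: "sentence_in LBoth F p"
    and ns: "\<not> sat (Mtw \<rho> \<rho>') (\<lambda>_. rep (\<lambda>n. 0)) p"
  shows "\<not> proves F p"
proof
  assume pr: "proves F p"
  have inj: "inj_on iota (carrier (Mtw \<rho> \<rho>'))" using inj_iota by (rule inj_on_subset) simp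
  have "model F (transport iota (Mtw \<rho> \<rho>'))" by (rule transport_model[OF inj Mtw_model[OF gp]])
  then have "holds (transport iota (Mtw \<rho> \<rho>')) p" by (rule proves_model[OF pr])
  moreover have "fm_in LBoth F p" using sin by (simp add: sentence_in_def)
  moreover have "\<forall>n. rep (\<lambda>n. 0) \<in> carrier (Mtw \<rho> \<rho>')" by simp
  moreover have "\<not> holds (transport iota (Mtw \<rho> \<rho>')) p"
    by (rule iso_not_holds[OF Mtw_struct transport_iso[OF inj], where e="\<lambda>_. rep (\<lambda>n. 0)"])
      (use calculation ns in auto)
  ultimately show False by blast
qed


lemma sat_phi_le: "sat M e (phi_le r) \<longleftrightarrow> (\<forall>a\<in>carrier M. (less M a (scal M r (one M)) \<or> a = scal M r (one M)) \<longrightarrow>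
   (less M (zero M) (plus M (minus M (times M a a) (scal M 2 a)) (one M)) \<or> zero M = plus M (minus M (times M a a) (scal M 2 a)) (one M)))"
  by (simp add: phi_le_def le_fm_def cst_def poly_tm_def)

lemma sat_phi_ge: "sat M e (phi_ge r) \<longleftrightarrow> (\<forall>a\<in>carrier M. (less M (scal M r (one M)) a \<or> scal M r (one M) = a) \<longrightarrow>
   (less M (zero M) (plus M (minus M (times M a a) (scal M 2 a)) (one M)) \<or> zero M = plus M (minus M (times M a a) (scal M 2 a)) (one M)))"
  by (simp add: phi_ge_def le_fm_def cst_def poly_tm_def)

lemma poly_neg:
  assumes gp: "gpair \<rho> \<rho>'" and u: "(u \<longlongrightarrow> 0) UF"
    and v: "eventually (\<lambda>n. \<rho>' ((1 + \<rho> (u n)) * (1 + \<rho> (u n)) - 1) - 2 * u n < 0) UF"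
  defines "x \<equiv> rep (\<lambda>n. 1 + u n)" and "M \<equiv> Mtw \<rho> \<rho>'"
  shows "\<not> (less M (zero M) (plus M (minus M (times M x x) (scal M 2 x)) (one M)) \<or>
            zero M = plus M (minus M (times M x x) (scal M 2 x)) (one M))"
proof
  define P where "P = plus M (minus M (times M x x) (scal M 2 x)) (one M)"
  define V where "V n = \<rho>' ((1 + \<rho> (u n)) * (1 + \<rho> (u n)) - 1) - 2 * u n" for n
  assume H2: "less M (zero M) (plus M (minus M (times M x x) (scal M 2 x)) (one M)) \<or>
            zero M = plus M (minus M (times M x x) (scal M 2 x)) (one M)"
  have Pv: "ueq P V"
    unfolding P_def M_def x_def V_def by (rule poly_val[OF gp u])
  have z: "ueq (zero M) (\<lambda>n. 0)" unfolding M_def Mtw_simps by (rule rep_ueq)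
  have v': "eventually (\<lambda>n. \<not> (0 < V n)) UF"
    using v unfolding V_def by (rule eventually_mono) simp
  have v'': "eventually (\<lambda>n. \<not> (0 = V n)) UF"
    using v unfolding V_def by (rule eventually_mono) simp
  show False
  proof (cases "less M (zero M) P")
    case True
    then have "eventually (\<lambda>n. zero M n < P n) UF" unfolding M_def Mtw_simps .
    then have "eventually (\<lambda>n. 0 < V n) UF"
      using ev_cong2[OF z Pv, of "(<)"] by blast
    then show False using ev_false v' by blast
  next
    case False
    then have "zero M = P" using H2 P_def by blast
    moreover have "zero M \<in> range rep" "P \<in> range rep" unfolding M_def P_def by simp_all
    ultimately have "ueq (zero M) P" using in_range_eq_iff by blast
    then have "eventually (\<lambda>n. zero M n = P n) UF" unfolding ueq_def .
    then have "eventually (\<lambda>n. 0 = V n) UF"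
      using ev_cong2[OF z Pv, of "(=)"] by blast
    then show False using ev_false v'' by blast
  qed
qed


lemma not_proves_le:
  assumes gp: "gpair \<rho> \<rho>'" and u: "(u \<longlongrightarrow> 0) UF" and r: "eventually (\<lambda>n. 1 + u n < r) UF"
    and v: "eventually (\<lambda>n. \<rho>' ((1 + \<rho> (u n)) * (1 + \<rho> (u n)) - 1) - 2 * u n < 0) UF"
    and sin: "sentence_in LBoth F (phi_le r)"
  shows "\<not> proves F (phi_le r)"
proof (rule not_proves_gen[OF gp sin])
  define x where "x = rep (\<lambda>n. 1 + u n)"
  define M where "M = Mtw \<rho> \<rho>'"
  have xX: "ueq x (\<lambda>n. 1 + u n)" unfolding x_def by (rule rep_ueq)
  have sr: "ueq (scal M r (one M)) (\<lambda>n. r * 1)"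
    unfolding M_def Mtw_simps by (rule ueq_rep_iff) (rule ueq_op1[OF rep_ueq])
  have "eventually (\<lambda>n. x n < scal M r (one M) n) UF"
    using ev_cong2[OF xX sr, of "(<)"] r by simp
  then have L: "less M x (scal M r (one M))" unfolding M_def Mtw_simps .
  have xin: "x \<in> carrier M" unfolding M_def x_def by simp
  have N: "\<not> (less M (zero M) (plus M (minus M (times M x x) (scal M 2 x)) (one M)) \<or>
            zero M = plus M (minus M (times M x x) (scal M 2 x)) (one M))"
    unfolding M_def x_def by (rule poly_neg[OF gp u v])
  show "\<not> sat (Mtw \<rho> \<rho>') (\<lambda>_. rep (\<lambda>n. 0)) (phi_le r)"
    unfolding sat_phi_le M_def[symmetric] using xin L N by blast
qed

lemma not_proves_ge:
  assumes gp: "gpair \<rho> \<rho>'" and u: "(u \<longlongrightarrow> 0) UF" and r: "eventually (\<lambda>n. r < 1 + u n) UF"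
    and v: "eventually (\<lambda>n. \<rho>' ((1 + \<rho> (u n)) * (1 + \<rho> (u n)) - 1) - 2 * u n < 0) UF"
    and sin: "sentence_in LBoth F (phi_ge r)"
  shows "\<not> proves F (phi_ge r)"
proof (rule not_proves_gen[OF gp sin])
  define x where "x = rep (\<lambda>n. 1 + u n)"
  define M where "M = Mtw \<rho> \<rho>'"
  have xX: "ueq x (\<lambda>n. 1 + u n)" unfolding x_def by (rule rep_ueq)
  have sr: "ueq (scal M r (one M)) (\<lambda>n. r * 1)"
    unfolding M_def Mtw_simps by (rule ueq_rep_iff) (rule ueq_op1[OF rep_ueq])
  have "eventually (\<lambda>n. scal M r (one M) n < x n) UF"
    using ev_cong2[OF sr xX, of "(<)"] r by simp
  then have L: "less M (scal M r (one M)) x" unfolding M_def Mtw_simps .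
  have xin: "x \<in> carrier M" unfolding M_def x_def by simp
  have N: "\<not> (less M (zero M) (plus M (minus M (times M x x) (scal M 2 x)) (one M)) \<or>
            zero M = plus M (minus M (times M x x) (scal M 2 x)) (one M))"
    unfolding M_def x_def by (rule poly_neg[OF gp u v])
  show "\<not> sat (Mtw \<rho> \<rho>') (\<lambda>_. rep (\<lambda>n. 0)) (phi_ge r)"
    unfolding sat_phi_ge M_def[symmetric] using xin L N by blast
qed



lemma cube_root_cancel: "root 3 (t ^ 3) = t" by (rule odd_real_root_power_cancel) simp
lemma root_cube_cancel: "(root 3 t) ^ 3 = t" by (rule odd_real_root_pow) simp

lemma good_root: "good (root 3)"
  unfolding good_def by (auto simp: strict_mono_def isCont_real_root)

lemma good_cube: "good (\<lambda>t::real. t ^ 3)"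
  unfolding good_def
proof (intro conjI)
  show "strict_mono (\<lambda>t::real. t ^ 3)"
  proof (rule strict_monoI)
    fix x y :: real assume "x < y"
    then have "root 3 (x ^ 3) < root 3 (y ^ 3)" by (simp only: cube_root_cancel)
    then show "x ^ 3 < y ^ 3" by simp
  qed
  show "isCont (\<lambda>t::real. t ^ 3) 0" by (intro continuous_intros)
qed simp

lemma gp1: "gpair (root 3) (\<lambda>t. t ^ 3)"
  unfolding gpair_def using good_root good_cube cube_root_cancel root_cube_cancel by blast

lemma gp2: "gpair (\<lambda>t. t ^ 3) (root 3)"
  using gpair_sym[OF gp1] .

lemma seq_UF: "(f \<longlongrightarrow> l) sequentially \<Longrightarrow> (f \<longlongrightarrow> l) UF"
  using UF tendsto_mono by (auto simp: ultra_def)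

lemma w_lim: "((\<lambda>n. inverse (real (Suc n))) \<longlongrightarrow> 0) UF"
  by (rule seq_UF[OF LIMSEQ_inverse_real_of_nat])

lemma ineq1: assumes "0 < (w::real)" "w \<le> 1/2" shows "((1 - w) * (1 - w) - 1) ^ 3 + 2 * w ^ 3 < 0"
proof -
  have "(3/2::real) ^ 3 \<le> (2 - w) ^ 3" using assms by (intro power_mono) auto
  then have a: "2 < (2 - w) ^ 3" by (simp add: power3_eq_cube)
  have b: "0 < w ^ 3" using assms by simp
  have "((1 - w) * (1 - w) - 1) ^ 3 + 2 * w ^ 3 = w ^ 3 * (2 - (2 - w) ^ 3)"
    by (simp add: power3_eq_cube algebra_simps)
  also have "\<dots> < 0" using a b by (simp add: mult_pos_neg)
  finally show ?thesis .
qed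

lemma ineq2: assumes "0 < (w::real)" "w \<le> 1" shows "root 3 ((1 + w ^ 3) * (1 + w ^ 3) - 1) - 2 * w < 0"
proof -
  have w3: "0 < w ^ 3" "w ^ 3 \<le> 1" using assms by (simp_all add: power_le_one)
  have "(1 + w ^ 3) * (1 + w ^ 3) - 1 < (2 * w) ^ 3"
  proof -
    have "(1 + w ^ 3) * (1 + w ^ 3) - 1 = w ^ 3 * (2 + w ^ 3)" by (simp add: algebra_simps)
    also have "\<dots> < w ^ 3 * 8" using w3 by (intro mult_strict_left_mono) auto
    also have "\<dots> = (2 * w) ^ 3" by (simp add: power_mult_distrib)
    finally show ?thesis .
  qed
  then have "root 3 ((1 + w ^ 3) * (1 + w ^ 3) - 1) < root 3 ((2 * w) ^ 3)" by simp
  then show ?thesis by (simp only: cube_root_cancel)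
qed

theorem main1:
  assumes SF: "subfield_of_reals F" and rF: "r \<in> F"
  shows "proves F (phi_le r) \<longleftrightarrow> r < 1"
proof
  assume pr: "proves F (phi_le r)"
  show "r < 1"
  proof (rule ccontr)
    assume "\<not> r < 1"
    then have r1: "1 \<le> r" by simp
    define u where "u n = - ((inverse (real (Suc n))) ^ 3)" for n
    have "((\<lambda>n. (inverse (real (Suc n))) ^ 3) \<longlongrightarrow> 0 ^ 3) UF" by (rule tendsto_power[OF w_lim])
    then have "((\<lambda>n. - ((inverse (real (Suc n))) ^ 3)) \<longlongrightarrow> - (0 ^ 3)) UF" by (rule tendsto_minus)
    then have ul: "(u \<longlongrightarrow> 0) UF" unfolding u_def by simp
    have uneg: "u n < 0" for n unfolding u_def by simp
    have "1 + u n < r" for n using r1 uneg[of n] by linarith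
    then have ur: "eventually (\<lambda>n. 1 + u n < r) UF" by (intro always_eventually allI)
    have "eventually (\<lambda>n. ((1 + root 3 (u n)) * (1 + root 3 (u n)) - 1) ^ 3 - 2 * u n < 0) sequentially"
      unfolding eventually_sequentially
    proof (intro exI allI impI)
      fix n :: nat assume "1 \<le> n"
      define w where "w = inverse (real (Suc n))"
      have w: "0 < w" "w \<le> 1/2" unfolding w_def using \<open>1 \<le> n\<close> by (auto simp: field_simps)
      have "root 3 (u n) = - w" unfolding u_def w_def[symmetric] by (simp add: real_root_minus cube_root_cancel)
      then show "((1 + root 3 (u n)) * (1 + root 3 (u n)) - 1) ^ 3 - 2 * u n < 0"
        using ineq1[OF w] unfolding u_def w_def[symmetric] by simp
    qed
    then have uv: "eventually (\<lambda>n. ((1 + root 3 (u n)) * (1 + root 3 (u n)) - 1) ^ 3 - 2 * u n < 0) UF"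
      using UF_seq by blast
    have "\<not> proves F (phi_le r)"
      by (rule not_proves_le[OF gp1 ul ur uv phi_le_in[OF SF rF]])
    then show False using pr by blast
  qed
next
  assume "r < 1"
  show "proves F (phi_le r)"
    unfolding proves_def using phi_le_in[OF SF rF] part1[OF SF _ rF \<open>r < 1\<close>] by (auto simp: model_def)
qed

theorem main2:
  assumes SF: "subfield_of_reals F" and rF: "r \<in> F"
  shows "proves F (phi_ge r) \<longleftrightarrow> r > 1"
proof
  assume pr: "proves F (phi_ge r)"
  show "r > 1"
  proof (rule ccontr)
    assume "\<not> r > 1"
    then have r1: "r \<le> 1" by simp
    define u where "u n = inverse (real (Suc n))" for n
    have ul: "(u \<longlongrightarrow> 0) UF" unfolding u_def by (rule w_lim)
    have upos: "0 < u n" for n unfolding u_def by simp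
    have "r < 1 + u n" for n using r1 upos[of n] by linarith
    then have ur: "eventually (\<lambda>n. r < 1 + u n) UF" by (intro always_eventually allI)
    have "\<forall>n. root 3 ((1 + u n ^ 3) * (1 + u n ^ 3) - 1) - 2 * u n < 0"
    proof
      fix n
      have "0 < u n" "u n \<le> 1" unfolding u_def by (auto simp: field_simps)
      then show "root 3 ((1 + u n ^ 3) * (1 + u n ^ 3) - 1) - 2 * u n < 0" by (rule ineq2)
    qed
    then have uv: "eventually (\<lambda>n. root 3 ((1 + u n ^ 3) * (1 + u n ^ 3) - 1) - 2 * u n < 0) UF"
      by (intro always_eventually)
    have "\<not> proves F (phi_ge r)"
      by (rule not_proves_ge[OF gp2 ul ur uv phi_ge_in[OF SF rF]])
    then show False using pr by blast
  qed
next
  assume "r > 1"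
  show "proves F (phi_ge r)"
    unfolding proves_def using phi_ge_in[OF SF rF] part2[OF SF _ rF \<open>r > 1\<close>] by (auto simp: model_def)
qed

theorem theorem5p3:
  fixes F :: "real set" and r :: real
  assumes "subfield_of_reals F" and "r \<in> F"
  shows "(proves F (phi_le r) \<longleftrightarrow> r < 1) \<and> (proves F (phi_ge r) \<longleftrightarrow> r > 1)"
  using main1[OF assms] main2[OF assms] by blast


end
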